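(* Consider the planted clique problem with $n\to\infty$, clique-size parameter $k=k_n$ and $\rho=k/n$. Suppose there is a fixed $\epsilon>0$ with $k\le n^{1/2-\epsilon}$ for all $n$, and $D=D_n$ satisfies $D=o\big((\log n/\log\log n)^2\big)$. Then $\mathrm{MMSE}_{\le D}\ge\rho-(1+o(1))\rho^2$.
   Context: Planted clique problem: $v\in\{0,1\}^n$ has i.i.d. $\mathrm{Bernoulli}(\rho)$ entries; conditionally on $v$, for each pair $i<j$ independently, $Y_{ij}=1$ if $v_iv_j=1$ and otherwise $Y_{ij}\sim\mathrm{Bernoulli}(1/2)$; the observation is $Y=(Y_{ij})_{i<j}$; the target is $x=v_1$. $\mathrm{MMSE}_{\le D}=\inf_f\mathbb{E}(f(Y)-x)^2$ over real polynomials $f$ of degree at most $D$ in the entries of $Y$. Asymptotic notation refers to $n\to\infty$. *)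

theory Defs
  imports Complex_Main "HOL-Library.Landau_Symbols"
begin

text \<open>Planted clique on vertex set {0..<n}; the paper's vertex 1 is vertex 0 here.
  The observation Y is encoded by the set E of pairs (i,j), i<j, with Y_ij = 1.
  The planted vector v is encoded by the set V of vertices with v_i = 1.\<close>

definition pc_pairs :: "nat \<Rightarrow> (nat \<times> nat) set" where
  "pc_pairs n = {(i, j). i < j \<and> j < n}"

definition pc_prob :: "nat \<Rightarrow> real \<Rightarrow> nat set \<Rightarrow> (nat \<times> nat) set \<Rightarrow> real" where
  "pc_prob n \<rho> V E =
     (\<Prod>i<n. if i \<in> V then \<rho> else 1 - \<rho>) *
     (\<Prod>(i, j)\<in>pc_pairs n.
        if i \<in> V \<and> j \<in> V then (if (i, j) \<in> E then 1 else 0) else 1 / 2)"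

definition pc_monomials :: "nat \<Rightarrow> nat \<Rightarrow> ((nat \<times> nat) \<Rightarrow> nat) set" where
  "pc_monomials n D =
     {\<alpha>. (\<forall>e. e \<notin> pc_pairs n \<longrightarrow> \<alpha> e = 0) \<and> (\<Sum>e\<in>pc_pairs n. \<alpha> e) \<le> D}"

definition pc_poly :: "nat \<Rightarrow> nat \<Rightarrow> (((nat \<times> nat) \<Rightarrow> nat) \<Rightarrow> real) \<Rightarrow> (nat \<times> nat) set \<Rightarrow> real" where
  "pc_poly n D c E =
     (\<Sum>\<alpha>\<in>pc_monomials n D. c \<alpha> * (\<Prod>e\<in>pc_pairs n. (if e \<in> E then 1 else 0) ^ \<alpha> e))"

definition pc_mse :: "nat \<Rightarrow> real \<Rightarrow> ((nat \<times> nat) set \<Rightarrow> real) \<Rightarrow> real" where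
  "pc_mse n \<rho> f =
     (\<Sum>V\<in>Pow {..<n}. \<Sum>E\<in>Pow (pc_pairs n).
        pc_prob n \<rho> V E * (f E - (if 0 \<in> V then 1 else 0))\<^sup>2)"

definition MMSE_le :: "nat \<Rightarrow> real \<Rightarrow> nat \<Rightarrow> real" where
  "MMSE_le n \<rho> D = (INF c. pc_mse n \<rho> (pc_poly n D c))"

end

theory Submission
  imports Defs "HOL-Analysis.Convex"
begin


definition edges :: "nat set \<Rightarrow> (nat \<times> nat) set" where
  "edges W = {(i, j). i < j \<and> i \<in> W \<and> j \<in> W}"

definition wV :: "nat set \<Rightarrow> (nat \<Rightarrow> real) \<Rightarrow> nat set \<Rightarrow> real" where
  "wV W q V = (\<Prod>i\<in>W. if i \<in> V then q i else 1 - q i)"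

definition wE :: "(nat \<times> nat) set \<Rightarrow> nat set \<Rightarrow> (nat \<times> nat) set \<Rightarrow> real" where
  "wE Es V E = (\<Prod>(i, j)\<in>Es. if i \<in> V \<and> j \<in> V then (if (i, j) \<in> E then 1 else 0) else 1 / 2)"

definition Exq :: "nat set \<Rightarrow> (nat \<Rightarrow> real) \<Rightarrow> ((nat \<times> nat) set \<Rightarrow> real) \<Rightarrow> real" where
  "Exq W q h = (\<Sum>V\<in>Pow W. wV W q V * (\<Sum>E\<in>Pow (edges W). wE (edges W) V E * h E))"

definition chi :: "(nat \<times> nat) set \<Rightarrow> (nat \<times> nat) set \<Rightarrow> real" where
  "chi B E = (\<Prod>e\<in>B. if e \<in> E then 1 else -1)"

definition polyE :: "'i set \<Rightarrow> ('i \<Rightarrow> real) \<Rightarrow> ('i \<Rightarrow> (nat \<times> nat) set) \<Rightarrow> (nat \<times> nat) set \<Rightarrow> real" where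
  "polyE I a M E = (\<Sum>i\<in>I. a i * (if M i \<subseteq> E then 1 else 0))"

lemma finite_edges[simp]: "finite W \<Longrightarrow> finite (edges W)"
proof -
  assume "finite W"
  have "edges W \<subseteq> W \<times> W" by (auto simp: edges_def)
  thus ?thesis using \<open>finite W\<close> finite_subset by blast
qed

lemma sum_Pow_prod:
  fixes \<phi> :: "'a \<Rightarrow> bool \<Rightarrow> real"
  assumes "finite H"
  shows "(\<Sum>E\<in>Pow H. \<Prod>e\<in>H. \<phi> e (e \<in> E)) = (\<Prod>e\<in>H. \<phi> e True + \<phi> e False)"
proof -
  have "(\<Prod>e\<in>H. \<phi> e True + \<phi> e False) =
        (\<Sum>X\<in>Pow H. (\<Prod>e\<in>X. \<phi> e True) * (\<Prod>e\<in>H-X. \<phi> e False))"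
    by (rule prod_add[OF assms])
  also have "\<dots> = (\<Sum>E\<in>Pow H. \<Prod>e\<in>H. \<phi> e (e \<in> E))"
  proof (rule sum.cong)
    fix X assume X: "X \<in> Pow H"
    have "(\<Prod>e\<in>H. \<phi> e (e \<in> X)) = (\<Prod>e\<in>H-X. \<phi> e (e \<in> X)) * (\<Prod>e\<in>X. \<phi> e (e \<in> X))"
      by (rule prod.subset_diff) (use X assms in auto)
    hence "(\<Prod>e\<in>H. \<phi> e (e \<in> X)) = (\<Prod>e\<in>X. \<phi> e (e \<in> X)) * (\<Prod>e\<in>H-X. \<phi> e (e \<in> X))"
      by (simp add: mult.commute)
    also have "\<dots> = (\<Prod>e\<in>X. \<phi> e True) * (\<Prod>e\<in>H-X. \<phi> e False)"
      by (simp add: prod.cong[OF refl, of "H-X" "\<lambda>e. \<phi> e (e \<in> X)" "\<lambda>e. \<phi> e False"])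
    finally show "(\<Prod>e\<in>X. \<phi> e True) * (\<Prod>e\<in>H-X. \<phi> e False) = (\<Prod>e\<in>H. \<phi> e (e \<in> X))" by simp
  qed simp
  finally show ?thesis by simp
qed

lemma sum_Pow_Un:
  assumes "finite A" "finite B" "A \<inter> B = {}"
  shows "(\<Sum>E\<in>Pow (A \<union> B). F E) = (\<Sum>X\<in>Pow A. \<Sum>Y\<in>Pow B. F (X \<union> Y))"
proof -
  have "(\<Sum>X\<in>Pow A. \<Sum>Y\<in>Pow B. F (X \<union> Y)) = (\<Sum>p\<in>Pow A \<times> Pow B. F (fst p \<union> snd p))"
    by (simp add: sum.cartesian_product case_prod_beta)
  also have "\<dots> = (\<Sum>E\<in>Pow (A \<union> B). F E)"
    by (rule sum.reindex_bij_witness[where j = "\<lambda>p. fst p \<union> snd p" and i = "\<lambda>E. (E \<inter> A, E \<inter> B)"])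
       (use assms in auto)
  finally show ?thesis by simp
qed

lemma sum_Pow_card_pow:
  fixes y :: real
  assumes "finite H"
  shows "(\<Sum>B\<in>Pow H. y ^ card B) = (1 + y) ^ card H"
proof -
  have "(\<Prod>e\<in>H. y + 1) = (\<Sum>X\<in>Pow H. (\<Prod>e\<in>X. y) * (\<Prod>e\<in>H-X. 1))"
    by (rule prod_add[OF assms])
  thus ?thesis by (simp add: add.commute)
qed



definition wEe :: "nat set \<Rightarrow> (nat \<times> nat) set \<Rightarrow> nat \<times> nat \<Rightarrow> real" where
  "wEe V E e = (if fst e \<in> V \<and> snd e \<in> V then (if e \<in> E then 1 else 0) else 1 / 2)"

lemma wE_alt: "wE Es V E = (\<Prod>e\<in>Es. wEe V E e)"
  unfolding wE_def wEe_def by (rule prod.cong) (auto split: prod.split)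

lemma wE_nonneg: "wE Es V E \<ge> 0"
  unfolding wE_alt wEe_def by (rule prod_nonneg) auto

lemma wV_nonneg: "(\<And>i. i \<in> W \<Longrightarrow> 0 \<le> q i \<and> q i \<le> 1) \<Longrightarrow> wV W q V \<ge> 0"
  unfolding wV_def by (rule prod_nonneg) auto

lemma wV_sum1:
  assumes "finite W"
  shows "(\<Sum>V\<in>Pow W. wV W q V) = 1"
proof -
  show ?thesis
    using sum_Pow_prod[OF assms, of "\<lambda>i b. if b then q i else 1 - q i"] by (simp add: wV_def)
qed

lemma wE_sum1:
  assumes "finite Es"
  shows "(\<Sum>E\<in>Pow Es. wE Es V E) = 1"
proof -
  have "(\<Sum>E\<in>Pow Es. wE Es V E) = (\<Sum>E\<in>Pow Es. \<Prod>e\<in>Es.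
     (\<lambda>e b. if fst e \<in> V \<and> snd e \<in> V then (if b then 1 else 0) else 1 / 2) e (e \<in> E))"
    by (simp add: wE_alt wEe_def)
  also have "\<dots> = (\<Prod>e\<in>Es. (\<lambda>e b. if fst e \<in> V \<and> snd e \<in> V then (if b then 1 else 0) else 1 / 2) e True
       + (\<lambda>e b. if fst e \<in> V \<and> snd e \<in> V then (if b then 1 else 0) else 1 / 2) e False)"
    by (rule sum_Pow_prod[OF assms])
  also have "\<dots> = 1" by (rule prod.neutral) auto
  finally show ?thesis .
qed

lemma Ex_alt: "Exq W q h = (\<Sum>V\<in>Pow W. \<Sum>E\<in>Pow (edges W). wV W q V * wE (edges W) V E * h E)"
  by (simp add: Exq_def sum_distrib_left mult.assoc)

lemma Ex_add: "Exq W q (\<lambda>E. h E + g E) = Exq W q h + Exq W q g"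
  by (simp add: Ex_alt distrib_left sum.distrib)

lemma Ex_cmult: "Exq W q (\<lambda>E. c * h E) = c * Exq W q h"
  by (simp add: Ex_alt sum_distrib_left ac_simps)

lemma Ex_const:
  assumes "finite W"
  shows "Exq W q (\<lambda>E. c) = c"
proof -
  have "Exq W q (\<lambda>E. c) = (\<Sum>V\<in>Pow W. wV W q V * c)"
    unfolding Exq_def by (simp add: sum_distrib_right[symmetric] wE_sum1 assms)
  also have "\<dots> = c" by (simp add: sum_distrib_right[symmetric] wV_sum1 assms)
  finally show ?thesis .
qed

lemma Ex_nonneg:
  assumes "\<And>i. i \<in> W \<Longrightarrow> 0 \<le> q i \<and> q i \<le> 1" "\<And>E. h E \<ge> 0"
  shows "Exq W q h \<ge> 0"
  unfolding Ex_alt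
  by (intro sum_nonneg mult_nonneg_nonneg wV_nonneg wE_nonneg assms) auto

lemma Ex_jensen:
  assumes "finite W" "\<And>i. i \<in> W \<Longrightarrow> 0 \<le> q i \<and> q i \<le> 1"
  shows "(Exq W q h)\<^sup>2 \<le> Exq W q (\<lambda>E. (h E)\<^sup>2)"
proof -
  define m where "m = Exq W q h"
  have "0 \<le> Exq W q (\<lambda>E. (h E - m)\<^sup>2)" by (rule Ex_nonneg[OF assms(2)]) auto
  also have "Exq W q (\<lambda>E. (h E - m)\<^sup>2) = Exq W q (\<lambda>E. (h E)\<^sup>2 + ((-2*m) * h E + m\<^sup>2))"
    by (simp add: power2_eq_square algebra_simps)
  also have "\<dots> = Exq W q (\<lambda>E. (h E)\<^sup>2) + Exq W q (\<lambda>E. (-2*m) * h E + m\<^sup>2)"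
    by (rule Ex_add)
  also have "Exq W q (\<lambda>E. (-2*m) * h E + m\<^sup>2) = Exq W q (\<lambda>E. (-2*m) * h E) + Exq W q (\<lambda>E. m\<^sup>2)"
    by (rule Ex_add)
  also have "Exq W q (\<lambda>E. (-2*m) * h E) = (-2*m) * m" unfolding m_def by (rule Ex_cmult)
  also have "Exq W q (\<lambda>E. m\<^sup>2) = m\<^sup>2" by (rule Ex_const[OF assms(1)])
  finally show ?thesis by (simp add: m_def power2_eq_square)
qed

lemma CS_sum:
  fixes c u v :: "'a \<Rightarrow> real"
  assumes "\<And>x. x \<in> A \<Longrightarrow> (c x)\<^sup>2 \<le> u x * v x" "\<And>x. x \<in> A \<Longrightarrow> u x \<ge> 0" "\<And>x. x \<in> A \<Longrightarrow> v x \<ge> 0"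
  shows "(\<Sum>x\<in>A. c x)\<^sup>2 \<le> (\<Sum>x\<in>A. u x) * (\<Sum>x\<in>A. v x)"
proof -
  have abs_le: "\<bar>c x\<bar> \<le> sqrt (u x) * sqrt (v x)" if "x \<in> A" for x
  proof -
    have "\<bar>c x\<bar> = sqrt ((c x)\<^sup>2)" by simp
    also have "\<dots> \<le> sqrt (u x * v x)" using assms(1)[OF that] real_sqrt_le_mono by blast
    finally show ?thesis using assms(2,3)[OF that] by (simp add: real_sqrt_mult)
  qed
  have "(\<Sum>x\<in>A. c x)\<^sup>2 \<le> (\<Sum>x\<in>A. \<bar>c x\<bar>)\<^sup>2"
    by (metis abs_ge_zero power2_abs power_mono sum_abs)
  also have "\<dots> \<le> (\<Sum>x\<in>A. sqrt (u x) * sqrt (v x))\<^sup>2"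
    by (intro power_mono sum_mono abs_le) (auto intro: sum_nonneg)
  also have "\<dots> \<le> (\<Sum>x\<in>A. (sqrt (u x))\<^sup>2) * (\<Sum>x\<in>A. (sqrt (v x))\<^sup>2)"
    by (rule Cauchy_Schwarz_ineq_sum)
  also have "\<dots> = (\<Sum>x\<in>A. u x) * (\<Sum>x\<in>A. v x)"
    using assms(2,3) by (simp cong: sum.cong)
  finally show ?thesis .
qed



lemma edges_mono: "A \<subseteq> B \<Longrightarrow> edges A \<subseteq> edges B"
  by (auto simp: edges_def)

lemma wV_split:
  assumes "finite W" "T \<subseteq> W" "X \<subseteq> T" "Y \<subseteq> W - T"
  shows "wV W q (X \<union> Y) = wV T q X * wV (W - T) q Y"
proof -
  have W: "W = T \<union> (W - T)" using assms by auto
  have "wV W q (X \<union> Y) = (\<Prod>i\<in>T \<union> (W - T). if i \<in> X \<union> Y then q i else 1 - q i)"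
    unfolding wV_def using W by simp
  also have "\<dots> = (\<Prod>i\<in>T. if i \<in> X \<union> Y then q i else 1 - q i) * (\<Prod>i\<in>W - T. if i \<in> X \<union> Y then q i else 1 - q i)"
    by (rule prod.union_disjoint) (use assms finite_subset in auto)
  also have "(\<Prod>i\<in>T. if i \<in> X \<union> Y then q i else 1 - q i) = wV T q X"
    unfolding wV_def by (rule prod.cong) (use assms in auto)
  also have "(\<Prod>i\<in>W - T. if i \<in> X \<union> Y then q i else 1 - q i) = wV (W - T) q Y"
    unfolding wV_def by (rule prod.cong) (use assms in auto)
  finally show ?thesis .
qed

lemma wV_01:
  assumes "\<And>i. i \<in> T \<Longrightarrow> q i = 0 \<or> q i = 1" "X \<subseteq> T" "finite T"
  shows "wV T q X = (if X = {i\<in>T. q i = 1} then 1 else 0)"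
proof (cases "X = {i\<in>T. q i = 1}")
  case True
  have "wV T q X = 1" unfolding wV_def
  proof (rule prod.neutral, intro ballI)
    fix i assume "i \<in> T" then show "(if i \<in> X then q i else 1 - q i) = 1"
      using assms(1)[of i] True by auto
  qed
  then show ?thesis using True by simp
next
  case False
  then obtain i where i: "i \<in> T" "(i \<in> X) \<noteq> (q i = 1)" using assms(2) by auto
  have "(if i \<in> X then q i else 1 - q i) = 0" using i assms(1)[OF i(1)] by auto
  then have "wV T q X = 0" unfolding wV_def
    using i(1) assms(3) by (subst prod_zero_iff) (auto split: if_splits)
  with False show ?thesis by simp
qed

lemma Vsplit:
  assumes "finite W" "T \<subseteq> W" "\<And>i. i \<in> T \<Longrightarrow> q i = 0 \<or> q i = 1"
  shows "(\<Sum>V\<in>Pow W. wV W q V * F V) = (\<Sum>V\<in>Pow (W - T). wV (W - T) q V * F ({i\<in>T. q i = 1} \<union> V))"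
proof -
  let ?T1 = "{i\<in>T. q i = 1}"
  have fT: "finite T" using assms finite_subset by blast
  have W: "W = T \<union> (W - T)" using assms by auto
  have "(\<Sum>V\<in>Pow W. wV W q V * F V) = (\<Sum>V\<in>Pow (T \<union> (W - T)). wV W q V * F V)" using W by simp
  also have "\<dots> = (\<Sum>X\<in>Pow T. \<Sum>Y\<in>Pow (W - T). wV W q (X \<union> Y) * F (X \<union> Y))"
    by (rule sum_Pow_Un) (use assms fT in auto)
  also have "\<dots> = (\<Sum>X\<in>Pow T. if X = ?T1 then (\<Sum>Y\<in>Pow (W - T). wV (W - T) q Y * F (X \<union> Y)) else 0)"
  proof (rule sum.cong[OF refl])
    fix X assume X: "X \<in> Pow T"
    have "(\<Sum>Y\<in>Pow (W - T). wV W q (X \<union> Y) * F (X \<union> Y)) =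
          (\<Sum>Y\<in>Pow (W - T). wV T q X * (wV (W - T) q Y * F (X \<union> Y)))"
      by (rule sum.cong[OF refl]) (use X assms in \<open>simp add: wV_split\<close>)
    also have "\<dots> = wV T q X * (\<Sum>Y\<in>Pow (W - T). wV (W - T) q Y * F (X \<union> Y))"
      by (simp add: sum_distrib_left)
    finally show "(\<Sum>Y\<in>Pow (W - T). wV W q (X \<union> Y) * F (X \<union> Y)) =
       (if X = ?T1 then (\<Sum>Y\<in>Pow (W - T). wV (W - T) q Y * F (X \<union> Y)) else 0)"
      using X assms(3) fT by (simp add: wV_01)
  qed
  also have "\<dots> = (\<Sum>Y\<in>Pow (W - T). wV (W - T) q Y * F (?T1 \<union> Y))"
    using fT by (simp add: sum.delta)
  finally show ?thesis .
qed

lemma wE_split: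
  assumes "finite W" "T \<subseteq> W" "X \<subseteq> edges W - edges (W - T)" "Y \<subseteq> edges (W - T)"
  shows "wE (edges W) V (X \<union> Y) = wE (edges W - edges (W - T)) V X * wE (edges (W - T)) V Y"
proof -
  let ?H = "edges W - edges (W - T)"
  have sub: "edges (W - T) \<subseteq> edges W" by (rule edges_mono) auto
  have EW: "edges W = ?H \<union> edges (W - T)" using sub by auto
  have fin: "finite (edges W)" using assms by simp
  have "wE (edges W) V (X \<union> Y) = (\<Prod>e\<in>?H \<union> edges (W - T). wEe V (X \<union> Y) e)"
    unfolding wE_alt using EW by simp
  also have "\<dots> = (\<Prod>e\<in>?H. wEe V (X \<union> Y) e) * (\<Prod>e\<in>edges (W - T). wEe V (X \<union> Y) e)"
    by (rule prod.union_disjoint) (use fin sub finite_subset in auto)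
  also have "(\<Prod>e\<in>?H. wEe V (X \<union> Y) e) = wE ?H V X"
    unfolding wE_alt by (rule prod.cong) (use assms in \<open>auto simp: wEe_def\<close>)
  also have "(\<Prod>e\<in>edges (W - T). wEe V (X \<union> Y) e) = wE (edges (W - T)) V Y"
    unfolding wE_alt by (rule prod.cong) (use assms in \<open>auto simp: wEe_def\<close>)
  finally show ?thesis .
qed

lemma Esplit:
  assumes "finite W" "T \<subseteq> W"
  shows "(\<Sum>E\<in>Pow (edges W). wE (edges W) V E * F E) =
    (\<Sum>X\<in>Pow (edges W - edges (W - T)). \<Sum>Y\<in>Pow (edges (W - T)).
        wE (edges W - edges (W - T)) V X * wE (edges (W - T)) V Y * F (X \<union> Y))"
proof -
  let ?H = "edges W - edges (W - T)"
  have sub: "edges (W - T) \<subseteq> edges W" by (rule edges_mono) auto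
  have EW: "edges W = ?H \<union> edges (W - T)" using sub by auto
  have fin: "finite (edges W)" using assms by simp
  have "(\<Sum>E\<in>Pow (edges W). wE (edges W) V E * F E) = (\<Sum>E\<in>Pow (?H \<union> edges (W - T)). wE (edges W) V E * F E)"
    using EW by simp
  also have "\<dots> = (\<Sum>X\<in>Pow ?H. \<Sum>Y\<in>Pow (edges (W - T)). wE (edges W) V (X \<union> Y) * F (X \<union> Y))"
    by (rule sum_Pow_Un) (use fin sub finite_subset in auto)
  also have "\<dots> = (\<Sum>X\<in>Pow ?H. \<Sum>Y\<in>Pow (edges (W - T)).
        wE ?H V X * wE (edges (W - T)) V Y * F (X \<union> Y))"
    by (intro sum.cong refl) (use assms in \<open>simp add: wE_split\<close>)
  finally show ?thesis .
qed

lemma wE_restrict: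
  assumes "\<And>e. e \<in> Es \<Longrightarrow> fst e \<notin> S \<and> snd e \<notin> S"
  shows "wE Es (S \<union> V) E = wE Es V E"
  unfolding wE_alt by (rule prod.cong) (use assms in \<open>auto simp: wEe_def\<close>)

lemma Exq_decomp:
  assumes "finite W" "T \<subseteq> W" "\<And>i. i \<in> T \<Longrightarrow> q i = 0 \<or> q i = 1"
  shows "Exq W q h = (\<Sum>V\<in>Pow (W - T). wV (W - T) q V *
     (\<Sum>X\<in>Pow (edges W - edges (W - T)). \<Sum>Y\<in>Pow (edges (W - T)).
        wE (edges W - edges (W - T)) ({i\<in>T. q i = 1} \<union> V) X * wE (edges (W - T)) V Y * h (X \<union> Y)))"
proof -
  have "Exq W q h = (\<Sum>V\<in>Pow (W - T). wV (W - T) q V *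
      (\<Sum>E\<in>Pow (edges W). wE (edges W) ({i\<in>T. q i = 1} \<union> V) E * h E))"
    unfolding Exq_def by (rule Vsplit[OF assms])
  also have "\<dots> = (\<Sum>V\<in>Pow (W - T). wV (W - T) q V *
     (\<Sum>X\<in>Pow (edges W - edges (W - T)). \<Sum>Y\<in>Pow (edges (W - T)).
        wE (edges W - edges (W - T)) ({i\<in>T. q i = 1} \<union> V) X * wE (edges (W - T)) ({i\<in>T. q i = 1} \<union> V) Y * h (X \<union> Y)))"
    by (simp add: Esplit[OF assms(1,2)])
  also have "\<dots> = (\<Sum>V\<in>Pow (W - T). wV (W - T) q V *
     (\<Sum>X\<in>Pow (edges W - edges (W - T)). \<Sum>Y\<in>Pow (edges (W - T)).
        wE (edges W - edges (W - T)) ({i\<in>T. q i = 1} \<union> V) X * wE (edges (W - T)) V Y * h (X \<union> Y)))"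
    by (subst wE_restrict) (auto simp: edges_def)
  finally show ?thesis .
qed



lemma prod_indicator:
  assumes "finite B"
  shows "(\<Prod>e\<in>B. if P e then 1 else 0 :: real) = (if \<forall>e\<in>B. P e then 1 else 0)"
proof (cases "\<forall>e\<in>B. P e")
  case True then show ?thesis by (auto intro!: prod.neutral)
next
  case False
  then have "(\<Prod>e\<in>B. if P e then 1 else 0 :: real) = 0"
    using assms by (subst prod_zero_iff) auto
  with False show ?thesis by simp
qed

lemma chi_restrict:
  assumes "finite H" "B \<subseteq> H"
  shows "chi B X = (\<Prod>e\<in>H. if e \<in> B then (if e \<in> X then 1 else -1) else 1)"
proof -
  have "chi B X = (\<Prod>e\<in>H \<inter> B. if e \<in> X then 1 else -1)"
  proof -
    have "H \<inter> B = B" using assms by auto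
    then show ?thesis unfolding chi_def by simp
  qed
  also have "\<dots> = (\<Prod>e\<in>H. if e \<in> B then (if e \<in> X then 1 else -1) else 1)"
    by (rule prod.inter_restrict[OF assms(1)])
  finally show ?thesis .
qed

lemma chi_sum_forced:
  assumes "finite H" "B \<subseteq> H"
  shows "(\<Sum>X\<in>Pow H. wE H V X * chi B X) = (if \<forall>e\<in>B. fst e \<in> V \<and> snd e \<in> V then 1 else 0)"
proof -
  define \<phi> where "\<phi> = (\<lambda>e b. (if fst e \<in> V \<and> snd e \<in> V then (if b then 1 else 0) else 1 / 2) *
      (if e \<in> B then (if b then 1 else -1) else (1::real)))"
  have "(\<Sum>X\<in>Pow H. wE H V X * chi B X) = (\<Sum>X\<in>Pow H. \<Prod>e\<in>H. \<phi> e (e \<in> X))"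
  proof (rule sum.cong[OF refl])
    fix X
    show "wE H V X * chi B X = (\<Prod>e\<in>H. \<phi> e (e \<in> X))"
      unfolding wE_alt chi_restrict[OF assms] prod.distrib[symmetric] \<phi>_def wEe_def by simp
  qed
  also have "\<dots> = (\<Prod>e\<in>H. \<phi> e True + \<phi> e False)" by (rule sum_Pow_prod[OF assms(1)])
  also have "\<dots> = (\<Prod>e\<in>H. if e \<in> B then (if fst e \<in> V \<and> snd e \<in> V then 1 else 0) else 1)"
    by (rule prod.cong) (auto simp: \<phi>_def)
  also have "\<dots> = (\<Prod>e\<in>H \<inter> B. if fst e \<in> V \<and> snd e \<in> V then 1 else 0)"
    by (rule prod.inter_restrict[symmetric, OF assms(1)])
  also have "H \<inter> B = B" using assms by auto
  also have "(\<Prod>e\<in>B. if fst e \<in> V \<and> snd e \<in> V then 1 else 0) = (if \<forall>e\<in>B. fst e \<in> V \<and> snd e \<in> V then 1 else (0::real))"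
    by (rule prod_indicator) (use assms finite_subset in blast)
  finally show ?thesis .
qed

lemma chi_sum_orth:
  assumes "finite H" "B \<subseteq> H" "B' \<subseteq> H" "\<And>e. e \<in> H \<Longrightarrow> \<not> (fst e \<in> V \<and> snd e \<in> V)"
  shows "(\<Sum>X\<in>Pow H. wE H V X * (chi B X * chi B' X)) = (if B = B' then 1 else 0)"
proof -
  define \<phi> where "\<phi> = (\<lambda>e b. (1 / 2) *
      (if e \<in> B then (if b then 1 else -1) else (1::real)) * (if e \<in> B' then (if b then 1 else -1) else (1::real)))"
  have "(\<Sum>X\<in>Pow H. wE H V X * (chi B X * chi B' X)) = (\<Sum>X\<in>Pow H. \<Prod>e\<in>H. \<phi> e (e \<in> X))"
  proof (rule sum.cong[OF refl])
    fix X
    have "wE H V X = (\<Prod>e\<in>H. 1 / 2)" unfolding wE_alt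
      by (rule prod.cong) (use assms(4) in \<open>auto simp: wEe_def\<close>)
    then show "wE H V X * (chi B X * chi B' X) = (\<Prod>e\<in>H. \<phi> e (e \<in> X))"
      unfolding chi_restrict[OF assms(1,2)] chi_restrict[OF assms(1,3)] \<phi>_def
      by (simp only: prod.distrib mult.assoc)
  qed
  also have "\<dots> = (\<Prod>e\<in>H. \<phi> e True + \<phi> e False)" by (rule sum_Pow_prod[OF assms(1)])
  also have "\<dots> = (\<Prod>e\<in>H. if (e \<in> B \<longleftrightarrow> e \<in> B') then 1 else 0)"
    by (rule prod.cong) (auto simp: \<phi>_def)
  also have "\<dots> = (if \<forall>e\<in>H. (e \<in> B \<longleftrightarrow> e \<in> B') then 1 else 0)"
    by (rule prod_indicator[OF assms(1)])
  also have "(\<forall>e\<in>H. (e \<in> B \<longleftrightarrow> e \<in> B')) \<longleftrightarrow> B = B'" using assms(2,3) by auto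
  finally show ?thesis .
qed

lemma ind_chi:
  assumes "finite C"
  shows "(if C \<subseteq> X then 1 else 0 :: real) = (1 / 2) ^ card C * (\<Sum>B\<in>Pow C. chi B X)"
proof -
  have "(\<Prod>e\<in>C. (if e \<in> X then 1 else -1) + 1) =
     (\<Sum>B\<in>Pow C. (\<Prod>e\<in>B. if e \<in> X then 1 else -1) * (\<Prod>e\<in>C - B. 1::real))"
    by (rule prod_add[OF assms])
  also have "\<dots> = (\<Sum>B\<in>Pow C. chi B X)" by (simp add: chi_def)
  finally have 1: "(\<Prod>e\<in>C. (if e \<in> X then 1 else -1) + 1) = (\<Sum>B\<in>Pow C. chi B X)" .
  have "(\<Prod>e\<in>C. (if e \<in> X then 1 else -1) + 1::real) = (\<Prod>e\<in>C. 2 * (if e \<in> X then 1 else 0))"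
    by (rule prod.cong) auto
  also have "\<dots> = 2 ^ card C * (\<Prod>e\<in>C. if e \<in> X then 1 else 0)"
    by (simp add: prod.distrib)
  also have "\<dots> = 2 ^ card C * (if C \<subseteq> X then 1 else 0)"
    using prod_indicator[OF assms, of "\<lambda>e. e \<in> X"] by (simp add: subset_eq)
  finally have 2: "(\<Sum>B\<in>Pow C. chi B X) = 2 ^ card C * (if C \<subseteq> X then 1 else 0)" using 1 by simp
  show ?thesis unfolding 2 by (simp add: power_one_over)
qed

definition gB :: "'i set \<Rightarrow> ('i \<Rightarrow> real) \<Rightarrow> ('i \<Rightarrow> (nat \<times> nat) set) \<Rightarrow> (nat \<times> nat) set
    \<Rightarrow> (nat \<times> nat) set \<Rightarrow> (nat \<times> nat) set \<Rightarrow> real" where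
  "gB I a M H B = polyE {i\<in>I. B \<subseteq> M i} (\<lambda>i. a i * (1 / 2) ^ card (M i \<inter> H)) (\<lambda>i. M i - H)"

lemma poly_recon:
  assumes "finite I" "finite H" "\<And>i. i \<in> I \<Longrightarrow> finite (M i) \<and> card (M i) \<le> d"
    "X \<subseteq> H" "Y \<inter> H = {}"
  shows "polyE I a M (X \<union> Y) = (\<Sum>B\<in>{B\<in>Pow H. card B \<le> d}. chi B X * gB I a M H B Y)"
proof -
  let ?Bs = "{B\<in>Pow H. card B \<le> d}"
  have "polyE I a M (X \<union> Y) = (\<Sum>i\<in>I. a i * (if M i \<inter> H \<subseteq> X then 1 else 0) * (if M i - H \<subseteq> Y then 1 else 0))"
    unfolding polyE_def
  proof (rule sum.cong[OF refl])
    fix i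
    have "M i \<subseteq> X \<union> Y \<longleftrightarrow> M i \<inter> H \<subseteq> X \<and> M i - H \<subseteq> Y" using assms(4,5) by blast
    then show "a i * (if M i \<subseteq> X \<union> Y then 1 else 0) =
        a i * (if M i \<inter> H \<subseteq> X then 1 else 0) * (if M i - H \<subseteq> Y then 1 else 0)" by simp
  qed
  also have "\<dots> = (\<Sum>i\<in>I. \<Sum>B\<in>{B \<in> ?Bs. B \<subseteq> M i}. chi B X * (a i * (1 / 2) ^ card (M i \<inter> H) * (if M i - H \<subseteq> Y then 1 else 0)))"
  proof (rule sum.cong[OF refl])
    fix i assume i: "i \<in> I"
    have fin: "finite (M i \<inter> H)" using assms(3)[OF i] by simp
    have P: "Pow (M i \<inter> H) = {B \<in> ?Bs. B \<subseteq> M i}"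
    proof -
      have "card B \<le> d" if "B \<subseteq> M i" for B
        using card_mono[OF _ that] assms(3)[OF i] by force
      then show ?thesis by auto
    qed
    show "a i * (if M i \<inter> H \<subseteq> X then 1 else 0) * (if M i - H \<subseteq> Y then 1 else 0) =
      (\<Sum>B\<in>{B \<in> ?Bs. B \<subseteq> M i}. chi B X * (a i * (1 / 2) ^ card (M i \<inter> H) * (if M i - H \<subseteq> Y then 1 else 0)))"
      unfolding ind_chi[OF fin, of X] P[symmetric] sum_distrib_right[symmetric]
      by (simp only: mult.commute mult.left_commute mult.assoc)
  qed
  also have "\<dots> = (\<Sum>B\<in>?Bs. \<Sum>i\<in>{i \<in> I. B \<subseteq> M i}. chi B X * (a i * (1 / 2) ^ card (M i \<inter> H) * (if M i - H \<subseteq> Y then 1 else 0)))"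
    by (rule sum.swap_restrict) (use assms in auto)
  also have "\<dots> = (\<Sum>B\<in>?Bs. chi B X * gB I a M H B Y)"
  proof (rule sum.cong[OF refl])
    fix B
    show "(\<Sum>i\<in>{i \<in> I. B \<subseteq> M i}. chi B X * (a i * (1 / 2) ^ card (M i \<inter> H) * (if M i - H \<subseteq> Y then 1 else 0))) =
      chi B X * gB I a M H B Y"
      unfolding gB_def polyE_def by (subst sum_distrib_left) (rule refl)
  qed
  finally show ?thesis .
qed



definition qf :: "real \<Rightarrow> nat set \<Rightarrow> nat \<Rightarrow> real" where
  "qf \<rho> T = (\<lambda>i. if i \<in> T then 1 else \<rho>)"

definition q0 :: "real \<Rightarrow> nat set \<Rightarrow> nat \<Rightarrow> real" where
  "q0 \<rho> T = (\<lambda>i. if i \<in> T then 0 else \<rho>)"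

definition Nb :: "nat set \<Rightarrow> (nat \<times> nat) set \<Rightarrow> nat set" where
  "Nb W' B = {j \<in> W'. \<exists>e\<in>B. fst e = j \<or> snd e = j}"

lemma wV_cong: "(\<And>i. i \<in> W \<Longrightarrow> q i = q' i) \<Longrightarrow> wV W q V = wV W q' V"
  unfolding wV_def by (rule prod.cong) auto

lemma wV_force:
  assumes "finite W" "U \<subseteq> W"
  shows "wV W (\<lambda>_. \<rho>) V * (if U \<subseteq> V then 1 else 0) = \<rho> ^ card U * wV W (qf \<rho> U) V"
proof (cases "U \<subseteq> V")
  case True
  have h1: "wV W (\<lambda>_. \<rho>) V = (\<Prod>i\<in>W - U. if i \<in> V then \<rho> else 1 - \<rho>) * (\<Prod>i\<in>U. if i \<in> V then \<rho> else 1 - \<rho>)"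
    unfolding wV_def by (rule prod.subset_diff[OF assms(2,1)])
  have h2: "(\<Prod>i\<in>U. if i \<in> V then \<rho> else 1 - \<rho>) = \<rho> ^ card U"
    using True by (simp add: subset_eq)
  have h3: "wV W (qf \<rho> U) V = (\<Prod>i\<in>W - U. if i \<in> V then qf \<rho> U i else 1 - qf \<rho> U i) *
      (\<Prod>i\<in>U. if i \<in> V then qf \<rho> U i else 1 - qf \<rho> U i)"
    unfolding wV_def by (rule prod.subset_diff[OF assms(2,1)])
  have h4: "(\<Prod>i\<in>U. if i \<in> V then qf \<rho> U i else 1 - qf \<rho> U i) = 1"
    using True by (auto simp: qf_def subset_eq intro!: prod.neutral)
  have h5: "(\<Prod>i\<in>W - U. if i \<in> V then qf \<rho> U i else 1 - qf \<rho> U i) = (\<Prod>i\<in>W - U. if i \<in> V then \<rho> else 1 - \<rho>)"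
    by (rule prod.cong) (auto simp: qf_def)
  show ?thesis using True unfolding h1 h2 h3 h4 h5 by simp
next
  case False
  then obtain i where i: "i \<in> U" "i \<notin> V" by auto
  have "wV W (qf \<rho> U) V = 0" unfolding wV_def
    using assms i by (subst prod_zero_iff) (auto simp: qf_def intro!: bexI[of _ i])
  with False show ?thesis by simp
qed

lemma wV_drop:
  assumes "finite W" "T \<subseteq> W" "0 \<le> \<rho>" "\<rho> \<le> 1"
  shows "(1 - \<rho>) ^ card T * wV W (q0 \<rho> T) V \<le> wV W (\<lambda>_. \<rho>) V"
proof (cases "V \<inter> T = {}")
  case True
  have h1: "wV W (\<lambda>_. \<rho>) V = (\<Prod>i\<in>W - T. if i \<in> V then \<rho> else 1 - \<rho>) * (\<Prod>i\<in>T. if i \<in> V then \<rho> else 1 - \<rho>)"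
    unfolding wV_def by (rule prod.subset_diff[OF assms(2,1)])
  have h2: "(\<Prod>i\<in>T. if i \<in> V then \<rho> else 1 - \<rho>) = (1 - \<rho>) ^ card T"
  proof -
    have "(\<Prod>i\<in>T. if i \<in> V then \<rho> else 1 - \<rho>) = (\<Prod>i\<in>T. 1 - \<rho>)"
      by (rule prod.cong) (use True in auto)
    then show ?thesis by simp
  qed
  have h3: "wV W (q0 \<rho> T) V = (\<Prod>i\<in>W - T. if i \<in> V then q0 \<rho> T i else 1 - q0 \<rho> T i) *
      (\<Prod>i\<in>T. if i \<in> V then q0 \<rho> T i else 1 - q0 \<rho> T i)"
    unfolding wV_def by (rule prod.subset_diff[OF assms(2,1)])
  have h4: "(\<Prod>i\<in>T. if i \<in> V then q0 \<rho> T i else 1 - q0 \<rho> T i) = 1"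
    using True by (auto simp: q0_def intro!: prod.neutral)
  have h5: "(\<Prod>i\<in>W - T. if i \<in> V then q0 \<rho> T i else 1 - q0 \<rho> T i) = (\<Prod>i\<in>W - T. if i \<in> V then \<rho> else 1 - \<rho>)"
    by (rule prod.cong) (auto simp: q0_def)
  show ?thesis unfolding h1 h2 h3 h4 h5 by simp
next
  case False
  then obtain i where i: "i \<in> T" "i \<in> V" by auto
  have "wV W (q0 \<rho> T) V = 0" unfolding wV_def
    using assms i finite_subset by (subst prod_zero_iff) (auto simp: q0_def intro!: bexI[of _ i])
  then show ?thesis using wV_nonneg[of W "\<lambda>_. \<rho>" V] assms by simp
qed

lemma Exq_drop:
  assumes "finite W" "T \<subseteq> W" "0 \<le> \<rho>" "\<rho> \<le> 1" "\<And>E. h E \<ge> 0"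
  shows "(1 - \<rho>) ^ card T * Exq W (q0 \<rho> T) h \<le> Exq W (\<lambda>_. \<rho>) h"
proof -
  have "(1 - \<rho>) ^ card T * Exq W (q0 \<rho> T) h =
        (\<Sum>V\<in>Pow W. ((1 - \<rho>) ^ card T * wV W (q0 \<rho> T) V) * (\<Sum>E\<in>Pow (edges W). wE (edges W) V E * h E))"
    unfolding Exq_def by (simp add: sum_distrib_left mult.assoc)
  also have "\<dots> \<le> Exq W (\<lambda>_. \<rho>) h" unfolding Exq_def
    by (intro sum_mono mult_right_mono wV_drop assms sum_nonneg mult_nonneg_nonneg wE_nonneg)
  finally show ?thesis .
qed



lemma sum_sep:
  fixes f g :: "'a \<Rightarrow> real"
  assumes "finite A" "finite C" "finite Bs"
  shows "(\<Sum>x\<in>A. \<Sum>y\<in>C. f x * g y * (\<Sum>b\<in>Bs. c b x * d b y)) =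
         (\<Sum>b\<in>Bs. (\<Sum>x\<in>A. f x * c b x) * (\<Sum>y\<in>C. g y * d b y))"
proof -
  have "(\<Sum>x\<in>A. \<Sum>y\<in>C. f x * g y * (\<Sum>b\<in>Bs. c b x * d b y)) =
        (\<Sum>x\<in>A. \<Sum>y\<in>C. \<Sum>b\<in>Bs. (f x * c b x) * (g y * d b y))"
    by (simp add: sum_distrib_left mult_ac)
  also have "\<dots> = (\<Sum>x\<in>A. \<Sum>b\<in>Bs. \<Sum>y\<in>C. (f x * c b x) * (g y * d b y))"
    by (rule sum.cong[OF refl], rule sum.swap)
  also have "\<dots> = (\<Sum>b\<in>Bs. \<Sum>x\<in>A. \<Sum>y\<in>C. (f x * c b x) * (g y * d b y))"
    by (rule sum.swap)
  also have "\<dots> = (\<Sum>b\<in>Bs. (\<Sum>x\<in>A. f x * c b x) * (\<Sum>y\<in>C. g y * d b y))"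
    by (simp add: sum_product)
  finally show ?thesis .
qed

lemma sum_square_pairs:
  fixes u :: "'a \<Rightarrow> real"
  shows "(\<Sum>b\<in>Bs. u b)\<^sup>2 = (\<Sum>p\<in>Bs \<times> Bs. u (fst p) * u (snd p))"
  by (simp add: power2_eq_square sum_product sum.cartesian_product case_prod_beta)

locale decomp =
  fixes W T :: "nat set" and I :: "'i set" and a :: "'i \<Rightarrow> real" and M :: "'i \<Rightarrow> (nat \<times> nat) set"
    and d :: nat and \<rho> :: real
  assumes finW: "finite W" and TW: "T \<subseteq> W" and finI: "finite I"
    and Mi: "\<And>i. i \<in> I \<Longrightarrow> M i \<subseteq> edges W \<and> card (M i) \<le> d"
    and rho1: "\<rho> \<noteq> 1"
begin

abbreviation "W' \<equiv> W - T"
abbreviation "H \<equiv> edges W - edges (W - T)"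
abbreviation "Bs \<equiv> {B\<in>Pow H. card B \<le> d}"
abbreviation "g \<equiv> polyE I a M"
abbreviation "gb B \<equiv> gB I a M H B"

lemma finH: "finite H" using finW by simp
lemma finBs: "finite Bs" using finH by simp
lemma finE': "finite (edges W')" using finW by simp

lemma recon:
  assumes "X \<in> Pow H" "Y \<in> Pow (edges W')"
  shows "g (X \<union> Y) = (\<Sum>B\<in>Bs. chi B X * gb B Y)"
proof (rule poly_recon[OF finI finH])
  fix i assume "i \<in> I"
  then show "finite (M i) \<and> card (M i) \<le> d" using Mi finW finite_subset[of "M i" "edges W"] by auto
qed (use assms in auto)

lemma forced:
  "Exq W (qf \<rho> T) g = (\<Sum>B\<in>Bs. \<rho> ^ card (Nb W' B) * Exq W' (qf \<rho> (Nb W' B)) (gb B))"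
proof -
  have T1: "{i\<in>T. qf \<rho> T i = 1} = T" by (auto simp: qf_def)
  have "Exq W (qf \<rho> T) g = (\<Sum>V\<in>Pow W'. wV W' (qf \<rho> T) V *
     (\<Sum>X\<in>Pow H. \<Sum>Y\<in>Pow (edges W'). wE H (T \<union> V) X * wE (edges W') V Y * g (X \<union> Y)))"
    using Exq_decomp[OF finW TW, of "qf \<rho> T" g] by (simp add: T1 qf_def)
  also have "\<dots> = (\<Sum>V\<in>Pow W'. wV W' (\<lambda>_. \<rho>) V *
     (\<Sum>B\<in>Bs. (if Nb W' B \<subseteq> V then 1 else 0) * (\<Sum>Y\<in>Pow (edges W'). wE (edges W') V Y * gb B Y)))"
  proof (rule sum.cong[OF refl])
    fix V assume V: "V \<in> Pow W'"
    have w: "wV W' (qf \<rho> T) V = wV W' (\<lambda>_. \<rho>) V" by (rule wV_cong) (auto simp: qf_def)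
    have "(\<Sum>X\<in>Pow H. \<Sum>Y\<in>Pow (edges W'). wE H (T \<union> V) X * wE (edges W') V Y * g (X \<union> Y)) =
          (\<Sum>X\<in>Pow H. \<Sum>Y\<in>Pow (edges W'). wE H (T \<union> V) X * wE (edges W') V Y * (\<Sum>B\<in>Bs. chi B X * gb B Y))"
      by (intro sum.cong refl) (simp add: recon)
    also have "\<dots> = (\<Sum>B\<in>Bs. (\<Sum>X\<in>Pow H. wE H (T \<union> V) X * chi B X) * (\<Sum>Y\<in>Pow (edges W'). wE (edges W') V Y * gb B Y))"
      by (rule sum_sep) (use finH finE' finBs in auto)
    also have "\<dots> = (\<Sum>B\<in>Bs. (if Nb W' B \<subseteq> V then 1 else 0) * (\<Sum>Y\<in>Pow (edges W'). wE (edges W') V Y * gb B Y))"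
    proof (rule sum.cong[OF refl])
      fix B assume B: "B \<in> Bs"
      have "(\<forall>e\<in>B. fst e \<in> T \<union> V \<and> snd e \<in> T \<union> V) \<longleftrightarrow> Nb W' B \<subseteq> V"
      proof
        assume "\<forall>e\<in>B. fst e \<in> T \<union> V \<and> snd e \<in> T \<union> V"
        then show "Nb W' B \<subseteq> V" by (auto simp: Nb_def)
      next
        assume N: "Nb W' B \<subseteq> V"
        show "\<forall>e\<in>B. fst e \<in> T \<union> V \<and> snd e \<in> T \<union> V"
        proof
          fix e assume e: "e \<in> B"
          then have "fst e \<in> W" "snd e \<in> W" using B by (auto simp: edges_def)
          then show "fst e \<in> T \<union> V \<and> snd e \<in> T \<union> V" using N e by (auto simp: Nb_def)
        qed
      qed
      then show "(\<Sum>X\<in>Pow H. wE H (T \<union> V) X * chi B X) * (\<Sum>Y\<in>Pow (edges W'). wE (edges W') V Y * gb B Y) =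
         (if Nb W' B \<subseteq> V then 1 else 0) * (\<Sum>Y\<in>Pow (edges W'). wE (edges W') V Y * gb B Y)"
        using B by (simp add: chi_sum_forced[OF finH])
    qed
    finally show "wV W' (qf \<rho> T) V * (\<Sum>X\<in>Pow H. \<Sum>Y\<in>Pow (edges W'). wE H (T \<union> V) X * wE (edges W') V Y * g (X \<union> Y)) =
      wV W' (\<lambda>_. \<rho>) V * (\<Sum>B\<in>Bs. (if Nb W' B \<subseteq> V then 1 else 0) * (\<Sum>Y\<in>Pow (edges W'). wE (edges W') V Y * gb B Y))"
      using w by simp
  qed
  also have "\<dots> = (\<Sum>B\<in>Bs. \<Sum>V\<in>Pow W'. (wV W' (\<lambda>_. \<rho>) V * (if Nb W' B \<subseteq> V then 1 else 0)) * (\<Sum>Y\<in>Pow (edges W'). wE (edges W') V Y * gb B Y))"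
    by (simp add: sum_distrib_left mult.assoc sum.swap[of _ "Pow W'"])
  also have "\<dots> = (\<Sum>B\<in>Bs. \<Sum>V\<in>Pow W'. (\<rho> ^ card (Nb W' B) * wV W' (qf \<rho> (Nb W' B)) V) * (\<Sum>Y\<in>Pow (edges W'). wE (edges W') V Y * gb B Y))"
    by (intro sum.cong refl arg_cong2[where f="(*)"] wV_force) (use finW in \<open>auto simp: Nb_def\<close>)
  also have "\<dots> = (\<Sum>B\<in>Bs. \<rho> ^ card (Nb W' B) * Exq W' (qf \<rho> (Nb W' B)) (gb B))"
    unfolding Exq_def by (simp add: sum_distrib_left mult.assoc)
  finally show ?thesis .
qed

lemma absent:
  "Exq W (q0 \<rho> T) (\<lambda>E. (g E)\<^sup>2) = (\<Sum>B\<in>Bs. Exq W' (\<lambda>_. \<rho>) (\<lambda>E. (gb B E)\<^sup>2))"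
proof -
  have T1: "{i\<in>T. q0 \<rho> T i = 1} = {}" by (auto simp: q0_def)
  have "Exq W (q0 \<rho> T) (\<lambda>E. (g E)\<^sup>2) = (\<Sum>V\<in>Pow W'. wV W' (q0 \<rho> T) V *
     (\<Sum>X\<in>Pow H. \<Sum>Y\<in>Pow (edges W'). wE H V X * wE (edges W') V Y * (g (X \<union> Y))\<^sup>2))"
    using Exq_decomp[OF finW TW, of "q0 \<rho> T" "\<lambda>E. (g E)\<^sup>2"] by (simp add: T1 q0_def)
  also have "\<dots> = (\<Sum>V\<in>Pow W'. wV W' (\<lambda>_. \<rho>) V *
     (\<Sum>B\<in>Bs. (\<Sum>Y\<in>Pow (edges W'). wE (edges W') V Y * (gb B Y)\<^sup>2)))"
  proof (rule sum.cong[OF refl])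
    fix V assume V: "V \<in> Pow W'"
    have w: "wV W' (q0 \<rho> T) V = wV W' (\<lambda>_. \<rho>) V" by (rule wV_cong) (auto simp: q0_def)
    have "(\<Sum>X\<in>Pow H. \<Sum>Y\<in>Pow (edges W'). wE H V X * wE (edges W') V Y * (g (X \<union> Y))\<^sup>2) =
          (\<Sum>X\<in>Pow H. \<Sum>Y\<in>Pow (edges W'). wE H V X * wE (edges W') V Y *
             (\<Sum>p\<in>Bs \<times> Bs. (chi (fst p) X * chi (snd p) X) * (gb (fst p) Y * gb (snd p) Y)))"
      by (intro sum.cong refl) (simp add: recon sum_square_pairs mult_ac)
    also have "\<dots> = (\<Sum>p\<in>Bs \<times> Bs. (\<Sum>X\<in>Pow H. wE H V X * (chi (fst p) X * chi (snd p) X)) *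
          (\<Sum>Y\<in>Pow (edges W'). wE (edges W') V Y * (gb (fst p) Y * gb (snd p) Y)))"
      by (rule sum_sep) (use finH finE' finBs in auto)
    also have "\<dots> = (\<Sum>p\<in>Bs \<times> Bs. (if fst p = snd p then 1 else 0) *
          (\<Sum>Y\<in>Pow (edges W'). wE (edges W') V Y * (gb (fst p) Y * gb (snd p) Y)))"
    proof (rule sum.cong[OF refl])
      fix p assume p: "p \<in> Bs \<times> Bs"
      have "(\<Sum>X\<in>Pow H. wE H V X * (chi (fst p) X * chi (snd p) X)) = (if fst p = snd p then 1 else 0)"
      proof (rule chi_sum_orth[OF finH])
        show "fst p \<subseteq> H" "snd p \<subseteq> H" using p by auto
        fix e assume "e \<in> H"
        then show "\<not> (fst e \<in> V \<and> snd e \<in> V)" using V by (auto simp: edges_def)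
      qed
      then show "(\<Sum>X\<in>Pow H. wE H V X * (chi (fst p) X * chi (snd p) X)) *
          (\<Sum>Y\<in>Pow (edges W'). wE (edges W') V Y * (gb (fst p) Y * gb (snd p) Y)) =
          (if fst p = snd p then 1 else 0) * (\<Sum>Y\<in>Pow (edges W'). wE (edges W') V Y * (gb (fst p) Y * gb (snd p) Y))"
        by simp
    qed
    also have "\<dots> = (\<Sum>B\<in>Bs. \<Sum>B'\<in>Bs. (if B = B' then 1 else 0) *
          (\<Sum>Y\<in>Pow (edges W'). wE (edges W') V Y * (gb B Y * gb B' Y)))"
      by (simp add: sum.cartesian_product case_prod_beta)
    also have "\<dots> = (\<Sum>B\<in>Bs. (\<Sum>Y\<in>Pow (edges W'). wE (edges W') V Y * (gb B Y)\<^sup>2))"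
    proof (rule sum.cong[OF refl])
      fix B assume B: "B \<in> Bs"
      have "(\<Sum>B'\<in>Bs. (if B = B' then 1 else 0) * (\<Sum>Y\<in>Pow (edges W'). wE (edges W') V Y * (gb B Y * gb B' Y))) =
            (\<Sum>B'\<in>Bs. (if B = B' then (\<Sum>Y\<in>Pow (edges W'). wE (edges W') V Y * (gb B Y * gb B' Y)) else 0))"
        by (rule sum.cong) auto
      also have "\<dots> = (\<Sum>Y\<in>Pow (edges W'). wE (edges W') V Y * (gb B Y * gb B Y))"
        using B finBs by (simp add: sum.delta)
      finally show "(\<Sum>B'\<in>Bs. (if B = B' then 1 else 0) * (\<Sum>Y\<in>Pow (edges W'). wE (edges W') V Y * (gb B Y * gb B' Y))) =
          (\<Sum>Y\<in>Pow (edges W'). wE (edges W') V Y * (gb B Y)\<^sup>2)" by (simp add: power2_eq_square)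
    qed
    finally show "wV W' (q0 \<rho> T) V * (\<Sum>X\<in>Pow H. \<Sum>Y\<in>Pow (edges W'). wE H V X * wE (edges W') V Y * (g (X \<union> Y))\<^sup>2) =
      wV W' (\<lambda>_. \<rho>) V * (\<Sum>B\<in>Bs. (\<Sum>Y\<in>Pow (edges W'). wE (edges W') V Y * (gb B Y)\<^sup>2))"
      using w by simp
  qed
  also have "\<dots> = (\<Sum>B\<in>Bs. Exq W' (\<lambda>_. \<rho>) (\<lambda>E. (gb B E)\<^sup>2))"
    unfolding Exq_def by (simp add: sum_distrib_left sum.swap[of _ "Pow W'"])
  finally show ?thesis .
qed

end



context decomp
begin

lemma gb_poly: "gb B = polyE {i\<in>I. B \<subseteq> M i} (\<lambda>i. a i * (1 / 2) ^ card (M i \<inter> H)) (\<lambda>i. M i - H)"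
  by (simp add: gB_def)

lemma gb_deg:
  assumes B: "B \<in> Bs" and i: "i \<in> {i\<in>I. B \<subseteq> M i}"
  shows "M i - H \<subseteq> edges W' \<and> card (M i - H) \<le> d - card B"
proof
  have Mi': "M i \<subseteq> edges W" "card (M i) \<le> d" using Mi i by auto
  show "M i - H \<subseteq> edges W'" using Mi' by auto
  have finM: "finite (M i)" using Mi' finW finite_subset[of "M i" "edges W"] by auto
  have "card (M i - H) = card (M i) - card (M i \<inter> H)"
    using finM by (simp add: card_Diff_subset_Int)
  moreover have "card B \<le> card (M i \<inter> H)"
    using B i finM by (intro card_mono) auto
  ultimately show "card (M i - H) \<le> d - card B" using Mi' by linarith
qed

lemma Nb_card:
  assumes B: "B \<in> Bs"
  shows "card (Nb W' B) \<le> card B"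
proof -
  define oth where "oth = (\<lambda>e::nat\<times>nat. if fst e \<in> T then snd e else fst e)"
  have fB: "finite B" using B finH finite_subset by auto
  have "Nb W' B \<subseteq> oth ` B"
  proof
    fix j assume "j \<in> Nb W' B"
    then obtain e where e: "e \<in> B" "fst e = j \<or> snd e = j" "j \<in> W'" by (auto simp: Nb_def)
    have eW: "fst e \<in> W" "snd e \<in> W" "fst e \<in> T \<or> snd e \<in> T" using B e(1) by (auto simp: edges_def)
    have "oth e = j" using e eW by (auto simp: oth_def)
    then show "j \<in> oth ` B" using e(1) by blast
  qed
  then have "card (Nb W' B) \<le> card (oth ` B)" using fB by (intro card_mono) auto
  also have "\<dots> \<le> card B" using fB by (rule card_image_le)
  finally show ?thesis .
qed

lemma step:
  assumes "0 \<le> \<rho>" "\<rho> \<le> 1" "L \<ge> 0"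
    and IH: "\<And>B. B \<in> Bs \<Longrightarrow> (Exq W' (qf \<rho> (Nb W' B)) (gb B))\<^sup>2 \<le> L ^ card (Nb W' B) * Exq W' (\<lambda>_. \<rho>) (\<lambda>E. (gb B E)\<^sup>2)"
  shows "(Exq W (qf \<rho> T) g)\<^sup>2 \<le> (\<Sum>B\<in>Bs. (\<rho>\<^sup>2 * L) ^ card (Nb W' B)) * Exq W (q0 \<rho> T) (\<lambda>E. (g E)\<^sup>2)"
proof -
  have "(Exq W (qf \<rho> T) g)\<^sup>2 = (\<Sum>B\<in>Bs. \<rho> ^ card (Nb W' B) * Exq W' (qf \<rho> (Nb W' B)) (gb B))\<^sup>2"
    by (simp add: forced)
  also have "\<dots> \<le> (\<Sum>B\<in>Bs. (\<rho>\<^sup>2 * L) ^ card (Nb W' B)) * (\<Sum>B\<in>Bs. Exq W' (\<lambda>_. \<rho>) (\<lambda>E. (gb B E)\<^sup>2))"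
  proof (rule CS_sum)
    fix B assume B: "B \<in> Bs"
    have "(\<rho> ^ card (Nb W' B) * Exq W' (qf \<rho> (Nb W' B)) (gb B))\<^sup>2 =
          (\<rho> ^ card (Nb W' B))\<^sup>2 * (Exq W' (qf \<rho> (Nb W' B)) (gb B))\<^sup>2" by (simp add: power_mult_distrib)
    also have "\<dots> \<le> (\<rho> ^ card (Nb W' B))\<^sup>2 * (L ^ card (Nb W' B) * Exq W' (\<lambda>_. \<rho>) (\<lambda>E. (gb B E)\<^sup>2))"
      by (intro mult_left_mono IH B) simp
    also have "\<dots> = (\<rho>\<^sup>2 * L) ^ card (Nb W' B) * Exq W' (\<lambda>_. \<rho>) (\<lambda>E. (gb B E)\<^sup>2)"
      by (simp add: power_mult_distrib power2_eq_square mult.assoc)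
    finally show "(\<rho> ^ card (Nb W' B) * Exq W' (qf \<rho> (Nb W' B)) (gb B))\<^sup>2
        \<le> (\<rho>\<^sup>2 * L) ^ card (Nb W' B) * Exq W' (\<lambda>_. \<rho>) (\<lambda>E. (gb B E)\<^sup>2)" .
    show "0 \<le> (\<rho>\<^sup>2 * L) ^ card (Nb W' B)" using assms by simp
    show "0 \<le> Exq W' (\<lambda>_. \<rho>) (\<lambda>E. (gb B E)\<^sup>2)" by (rule Ex_nonneg) (use assms in auto)
  qed
  also have "(\<Sum>B\<in>Bs. Exq W' (\<lambda>_. \<rho>) (\<lambda>E. (gb B E)\<^sup>2)) = Exq W (q0 \<rho> T) (\<lambda>E. (g E)\<^sup>2)"
    by (simp add: absent)
  finally show ?thesis .
qed

end

lemma qf_empty: "qf \<rho> {} = (\<lambda>_. \<rho>)" by (simp add: qf_def)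

lemma main_ind:
  fixes n Dmax :: nat and \<rho> L :: real
  assumes rho: "0 < \<rho>" "\<rho> < 1" and L: "L \<ge> 0"
    and comb: "\<And>W T d. finite W \<Longrightarrow> card W \<le> n \<Longrightarrow> T \<subseteq> W \<Longrightarrow> T \<noteq> {} \<Longrightarrow> card T \<le> Dmax \<Longrightarrow> d \<le> Dmax \<Longrightarrow>
        (\<Sum>B\<in>{B\<in>Pow (edges W - edges (W - T)). card B \<le> d}. (\<rho>\<^sup>2 * L) ^ card (Nb (W - T) B))
          \<le> (1 - \<rho>) ^ card T * L ^ card T"
  shows "\<forall>W T (I::'i set) a M. finite W \<longrightarrow> card W \<le> n \<longrightarrow> T \<subseteq> W \<longrightarrow> card T \<le> Dmax \<longrightarrow> finite I \<longrightarrow>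
     (\<forall>i\<in>I. M i \<subseteq> edges W \<and> card (M i) \<le> d) \<longrightarrow> d \<le> Dmax \<longrightarrow>
     (Exq W (qf \<rho> T) (polyE I a M))\<^sup>2 \<le> L ^ card T * Exq W (\<lambda>_. \<rho>) (\<lambda>E. (polyE I a M E)\<^sup>2)"
proof (induction d rule: less_induct)
  case (less d)
  show ?case
  proof (intro allI impI)
    fix W T and I :: "'i set" and a M
    assume W: "finite W" "card W \<le> n" and TW: "T \<subseteq> W" and Tc: "card T \<le> Dmax" and fI: "finite I"
      and Mi: "\<forall>i\<in>I. M i \<subseteq> edges W \<and> card (M i) \<le> d" and dD: "d \<le> Dmax"
    have rq: "\<And>i. i \<in> W \<Longrightarrow> 0 \<le> (\<lambda>_. \<rho>) i \<and> (\<lambda>_. \<rho>) i \<le> 1" using rho by auto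
    show "(Exq W (qf \<rho> T) (polyE I a M))\<^sup>2 \<le> L ^ card T * Exq W (\<lambda>_. \<rho>) (\<lambda>E. (polyE I a M E)\<^sup>2)"
    proof (cases "T = {}")
      case True
      then show ?thesis using Ex_jensen[OF W(1) rq] by (simp add: qf_empty)
    next
      case False
      interpret decomp W T I a M d \<rho>
      proof
        show "finite W" "T \<subseteq> W" "finite I" "\<rho> \<noteq> 1" using W TW fI rho by auto
        fix i assume "i \<in> I" then show "M i \<subseteq> edges W \<and> card (M i) \<le> d" using Mi by blast
      qed
      have IH: "(Exq W' (qf \<rho> (Nb W' B)) (gb B))\<^sup>2 \<le> L ^ card (Nb W' B) * Exq W' (\<lambda>_. \<rho>) (\<lambda>E. (gb B E)\<^sup>2)"
        if B: "B \<in> Bs" for B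
      proof (cases "Nb W' B = {}")
        case True
        have rq': "\<And>i. i \<in> W' \<Longrightarrow> 0 \<le> (\<lambda>_. \<rho>) i \<and> (\<lambda>_. \<rho>) i \<le> 1" using rho by auto
        show ?thesis using Ex_jensen[of W' "\<lambda>_. \<rho>" "gb B"] W(1) True rho by (simp add: qf_empty)
      next
        case False
        have fB: "finite B" by (rule finite_subset[OF _ finH]) (use B in auto)
        have "B \<noteq> {}" using False by (auto simp: Nb_def)
        then have cB: "card B \<ge> 1" using fB by (simp add: Suc_le_eq card_gt_0_iff)
        have cBd: "card B \<le> d" using B by simp
        have lt: "d - card B < d" using cB cBd by linarith
        have "card W' \<le> n" using W card_mono[OF W(1), of W'] by auto
        moreover have "card (Nb W' B) \<le> Dmax" using Nb_card[OF B] cBd dD by linarith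
        moreover have "Nb W' B \<subseteq> W'" by (auto simp: Nb_def)
        moreover have "\<forall>i\<in>{i\<in>I. B \<subseteq> M i}. M i - H \<subseteq> edges W' \<and> card (M i - H) \<le> d - card B"
          using gb_deg[OF B] by blast
        ultimately have IHi: "(Exq W' (qf \<rho> (Nb W' B)) (polyE {i\<in>I. B \<subseteq> M i} (\<lambda>i. a i * (1 / 2) ^ card (M i \<inter> H)) (\<lambda>i. M i - H)))\<^sup>2
           \<le> L ^ card (Nb W' B) * Exq W' (\<lambda>_. \<rho>) (\<lambda>E. (polyE {i\<in>I. B \<subseteq> M i} (\<lambda>i. a i * (1 / 2) ^ card (M i \<inter> H)) (\<lambda>i. M i - H) E)\<^sup>2)"
          by (intro less.IH[OF lt, rule_format]) (use W fI dD in auto)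
        show ?thesis using IHi by (simp only: gb_poly)
      qed
      have st: "(Exq W (qf \<rho> T) g)\<^sup>2 \<le> (\<Sum>B\<in>Bs. (\<rho>\<^sup>2 * L) ^ card (Nb W' B)) * Exq W (q0 \<rho> T) (\<lambda>E. (g E)\<^sup>2)"
        by (rule step) (use rho L IH in auto)
      have E0: "Exq W (q0 \<rho> T) (\<lambda>E. (g E)\<^sup>2) \<ge> 0" by (rule Ex_nonneg) (use rho in \<open>auto simp: q0_def\<close>)
      have cb: "(\<Sum>B\<in>Bs. (\<rho>\<^sup>2 * L) ^ card (Nb W' B)) \<le> (1 - \<rho>) ^ card T * L ^ card T"
        by (rule comb) (use W TW False Tc dD in auto)
      have dr: "(1 - \<rho>) ^ card T * Exq W (q0 \<rho> T) (\<lambda>E. (g E)\<^sup>2) \<le> Exq W (\<lambda>_. \<rho>) (\<lambda>E. (g E)\<^sup>2)"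
        by (rule Exq_drop) (use W TW rho in auto)
      have "(Exq W (qf \<rho> T) g)\<^sup>2 \<le> ((1 - \<rho>) ^ card T * L ^ card T) * Exq W (q0 \<rho> T) (\<lambda>E. (g E)\<^sup>2)"
        using st mult_right_mono[OF cb E0] by linarith
      also have "\<dots> = L ^ card T * ((1 - \<rho>) ^ card T * Exq W (q0 \<rho> T) (\<lambda>E. (g E)\<^sup>2))" by simp
      also have "\<dots> \<le> L ^ card T * Exq W (\<lambda>_. \<rho>) (\<lambda>E. (g E)\<^sup>2)"
        using dr L by (intro mult_left_mono) auto
      finally show ?thesis .
    qed
  qed
qed



lemma card_edges_le: "finite Z \<Longrightarrow> card (edges Z) \<le> (card Z)\<^sup>2"
proof -
  assume fZ: "finite Z"
  have "edges Z \<subseteq> Z \<times> Z" by (auto simp: edges_def)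
  then have "card (edges Z) \<le> card (Z \<times> Z)" using fZ by (intro card_mono) auto
  also have "\<dots> = (card Z)\<^sup>2" by (simp add: card_cartesian_product power2_eq_square)
  finally show ?thesis .
qed

lemma Nb_card_gen:
  assumes "finite W" "B \<subseteq> edges W - edges (W - T)"
  shows "card (Nb (W - T) B) \<le> card B"
proof -
  define oth where "oth = (\<lambda>e::nat\<times>nat. if fst e \<in> T then snd e else fst e)"
  have fB: "finite B" by (rule finite_subset[OF assms(2)]) (use assms(1) in simp)
  have "Nb (W - T) B \<subseteq> oth ` B"
  proof
    fix j assume "j \<in> Nb (W - T) B"
    then obtain e where e: "e \<in> B" "fst e = j \<or> snd e = j" "j \<in> W - T" by (auto simp: Nb_def)
    have eW: "fst e \<in> W" "snd e \<in> W" "fst e \<in> T \<or> snd e \<in> T" using assms(2) e(1) by (auto simp: edges_def)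
    have "oth e = j" using e eW by (auto simp: oth_def)
    then show "j \<in> oth ` B" using e(1) by blast
  qed
  then have "card (Nb (W - T) B) \<le> card (oth ` B)" using fB by (intro card_mono) auto
  also have "\<dots> \<le> card B" using fB by (rule card_image_le)
  finally show ?thesis .
qed

lemma B_in_edges:
  assumes "B \<subseteq> edges W - edges (W - T)"
  shows "B \<subseteq> edges (T \<union> Nb (W - T) B)"
proof
  fix e assume e: "e \<in> B"
  then obtain i j where ij: "e = (i, j)" "i < j" "i \<in> W" "j \<in> W" using assms by (auto simp: edges_def)
  have "i \<in> T \<union> Nb (W - T) B" using ij e by (auto simp: Nb_def intro!: bexI[of _ e])
  moreover have "j \<in> T \<union> Nb (W - T) B" using ij e by (auto simp: Nb_def intro!: bexI[of _ e])
  ultimately show "e \<in> edges (T \<union> Nb (W - T) B)" using ij by (auto simp: edges_def)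
qed

lemma comb_general:
  fixes y L0 :: real and D1 n d :: nat
  assumes W: "finite W" "card W \<le> n" and TW: "T \<subseteq> W" and dD: "d \<le> D1" and Tc: "card T \<le> D1"
    and y: "y \<ge> 0" and L0: "L0 \<ge> 0"
    and cnt: "\<And>(X::(nat\<times>nat) set) m. finite X \<Longrightarrow> card X \<le> m\<^sup>2 \<Longrightarrow> m \<le> 2 * D1 \<Longrightarrow> real (card {B\<in>Pow X. card B \<le> d}) \<le> L0 ^ m"
  shows "(\<Sum>B\<in>{B\<in>Pow (edges W - edges (W - T)). card B \<le> d}. y ^ card (Nb (W - T) B))
          \<le> L0 ^ card T * (1 + y * L0) ^ n"
proof -
  let ?H = "edges W - edges (W - T)"
  let ?Bs = "{B\<in>Pow ?H. card B \<le> d}"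
  let ?Us = "{U\<in>Pow (W - T). card U \<le> d}"
  let ?F = "\<lambda>U. {B\<in>Pow (edges (T \<union> U)). card B \<le> d}"
  define f where "f = (\<lambda>B. (Nb (W - T) B, B))"
  have fT: "finite T" using W TW finite_subset by blast
  have finH: "finite ?H" using W by simp
  have finF: "finite (?F U)" if "U \<subseteq> W" for U
  proof -
    have "finite (T \<union> U)" using fT W that finite_subset by blast
    then have "finite (Pow (edges (T \<union> U)))" by simp
    then show ?thesis by (rule finite_subset[rotated]) auto
  qed
  have finS: "finite (Sigma ?Us ?F)"
    by (rule finite_SigmaI) (use W finF in auto)
  have inj: "inj_on f ?Bs" by (auto simp: f_def inj_on_def)
  have img: "f ` ?Bs \<subseteq> Sigma ?Us ?F"
  proof
    fix p assume "p \<in> f ` ?Bs"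
    then obtain B where B: "B \<in> ?Bs" "p = f B" by auto
    have "card (Nb (W - T) B) \<le> d" using Nb_card_gen[OF W(1), of B T] B by auto
    moreover have "Nb (W - T) B \<subseteq> W - T" by (auto simp: Nb_def)
    moreover have "B \<subseteq> edges (T \<union> Nb (W - T) B)" using B_in_edges[of B W T] B by auto
    ultimately show "p \<in> Sigma ?Us ?F" using B by (auto simp: f_def)
  qed
  have "(\<Sum>B\<in>?Bs. y ^ card (Nb (W - T) B)) = (\<Sum>p\<in>f ` ?Bs. y ^ card (fst p))"
    by (subst sum.reindex[OF inj]) (simp add: f_def)
  also have "\<dots> \<le> (\<Sum>p\<in>Sigma ?Us ?F. y ^ card (fst p))"
    by (rule sum_mono2[OF finS img]) (use y in auto)
  also have "\<dots> = (\<Sum>U\<in>?Us. \<Sum>B\<in>?F U. y ^ card U)"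
  proof -
    have "(\<Sum>U\<in>?Us. \<Sum>B\<in>?F U. y ^ card U) = (\<Sum>(U, B)\<in>Sigma ?Us ?F. y ^ card U)"
      by (rule sum.Sigma) (use W finF in auto)
    then show ?thesis by (simp add: case_prod_beta)
  qed
  also have "\<dots> = (\<Sum>U\<in>?Us. real (card (?F U)) * y ^ card U)" by simp
  also have "\<dots> \<le> (\<Sum>U\<in>?Us. L0 ^ (card T + card U) * y ^ card U)"
  proof (rule sum_mono)
    fix U assume U: "U \<in> ?Us"
    have fU: "finite U" using U W finite_subset by auto
    have cTU: "card (T \<union> U) = card T + card U"
      using U fT fU by (subst card_Un_disjoint) auto
    have c1: "finite (edges (T \<union> U))" using fT fU by simp
    have c2: "card (edges (T \<union> U)) \<le> (card T + card U)\<^sup>2"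
      using card_edges_le[of "T \<union> U"] fT fU cTU by simp
    have c3: "card T + card U \<le> 2 * D1" using U Tc dD by auto
    have "real (card (?F U)) \<le> L0 ^ (card T + card U)"
      using cnt[OF c1 c2 c3] .
    then show "real (card (?F U)) * y ^ card U \<le> L0 ^ (card T + card U) * y ^ card U"
      using y by (intro mult_right_mono) auto
  qed
  also have "\<dots> \<le> (\<Sum>U\<in>Pow (W - T). L0 ^ (card T + card U) * y ^ card U)"
    by (rule sum_mono2) (use W y L0 in auto)
  also have "\<dots> = L0 ^ card T * (\<Sum>U\<in>Pow (W - T). (y * L0) ^ card U)"
    by (simp add: sum_distrib_left power_add power_mult_distrib mult_ac)
  also have "\<dots> = L0 ^ card T * (1 + y * L0) ^ card (W - T)"
    by (simp add: sum_Pow_card_pow W)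
  also have "\<dots> \<le> L0 ^ card T * (1 + y * L0) ^ n"
  proof -
    have "card (W - T) \<le> n" using W card_mono[OF W(1), of "W - T"] by auto
    then have "(1 + y * L0) ^ card (W - T) \<le> (1 + y * L0) ^ n"
      using y L0 by (intro power_increasing) auto
    then show ?thesis using L0 by (intro mult_left_mono) auto
  qed
  finally show ?thesis .
qed

lemma star_bound:
  fixes y :: real and n :: nat
  assumes W: "finite W" "card W \<le> n" "0 \<in> W" and y: "y \<ge> 0"
  shows "(\<Sum>B\<in>{B\<in>Pow (edges W - edges (W - {0})). card B \<le> d}. y ^ card (Nb (W - {0}) B)) \<le> (1 + y) ^ n"
proof -
  let ?H = "edges W - edges (W - {0})"
  have Hs: "fst e = 0 \<and> snd e \<in> W - {0}" if "e \<in> ?H" for e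
    using that by (auto simp: edges_def)
  have finH: "finite ?H" using W by simp
  have injH: "inj_on snd ?H"
  proof (rule inj_onI)
    fix e e' assume "e \<in> ?H" "e' \<in> ?H" "snd e = snd e'"
    then show "e = e'" using Hs[of e] Hs[of e'] by (simp add: prod_eq_iff)
  qed
  have cardB: "card (Nb (W - {0}) B) = card B" if B: "B \<subseteq> ?H" for B
  proof -
    have "Nb (W - {0}) B = snd ` B"
    proof
      show "Nb (W - {0}) B \<subseteq> snd ` B"
      proof
        fix j assume "j \<in> Nb (W - {0}) B"
        then obtain e where e: "e \<in> B" "fst e = j \<or> snd e = j" "j \<in> W - {0}" by (auto simp: Nb_def)
        then have "snd e = j" using Hs[of e] B by auto
        then show "j \<in> snd ` B" using e by blast
      qed
      show "snd ` B \<subseteq> Nb (W - {0}) B" using Hs B by (auto simp: Nb_def)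
    qed
    moreover have "inj_on snd B" using injH B inj_on_subset by blast
    ultimately show ?thesis by (simp add: card_image)
  qed
  have "(\<Sum>B\<in>{B\<in>Pow ?H. card B \<le> d}. y ^ card (Nb (W - {0}) B)) = (\<Sum>B\<in>{B\<in>Pow ?H. card B \<le> d}. y ^ card B)"
    by (rule sum.cong) (auto simp: cardB)
  also have "\<dots> \<le> (\<Sum>B\<in>Pow ?H. y ^ card B)"
    by (rule sum_mono2) (use finH y in auto)
  also have "\<dots> = (1 + y) ^ card ?H" by (rule sum_Pow_card_pow[OF finH])
  also have "\<dots> \<le> (1 + y) ^ n"
  proof -
    have "card ?H \<le> card (W - {0})"
    proof (rule card_inj_on_le[OF injH])
      show "snd ` ?H \<subseteq> W - {0}"
      proof
        fix j assume "j \<in> snd ` ?H"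
        then obtain e where "e \<in> ?H" "j = snd e" by blast
        then show "j \<in> W - {0}" using Hs[of e] by simp
      qed
    qed (use W in auto)
    also have "\<dots> \<le> n" using W card_mono[OF W(1), of "W - {0}"] by auto
    finally show ?thesis using y by (intro power_increasing) auto
  qed
  finally show ?thesis .
qed



lemma quad:
  fixes \<rho> \<beta> A B t :: real
  assumes "0 < \<rho>" "\<rho> < 1" "\<beta> \<ge> 1" "A \<ge> (t - 1)\<^sup>2" "t\<^sup>2 \<le> \<beta> * B"
  shows "\<rho> - \<beta> * \<rho>\<^sup>2 \<le> \<rho> * A + (1 - \<rho>) * B"
proof -
  define c where "c = \<rho> * \<beta> + 1 - \<rho>"
  have c1: "c \<ge> 1" using assms by (simp add: c_def)
  have sq: "c * (c * t\<^sup>2 - 2 * \<rho> * \<beta> * t + \<rho>\<^sup>2 * \<beta>\<^sup>2) = (c * t - \<rho> * \<beta>)\<^sup>2 + \<rho>\<^sup>2 * \<beta>\<^sup>2 * (c - 1)"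
    by (simp add: power2_eq_square algebra_simps)
  have "0 \<le> (c * t - \<rho> * \<beta>)\<^sup>2 + \<rho>\<^sup>2 * \<beta>\<^sup>2 * (c - 1)" using c1 by simp
  then have q0': "0 \<le> c * (c * t\<^sup>2 - 2 * \<rho> * \<beta> * t + \<rho>\<^sup>2 * \<beta>\<^sup>2)" using sq by simp
  have q: "0 \<le> c * t\<^sup>2 - 2 * \<rho> * \<beta> * t + \<rho>\<^sup>2 * \<beta>\<^sup>2"
    using zero_le_mult_iff[of c "c * t\<^sup>2 - 2 * \<rho> * \<beta> * t + \<rho>\<^sup>2 * \<beta>\<^sup>2"] q0' c1 by auto
  have e: "c * t\<^sup>2 - 2 * \<rho> * \<beta> * t + \<rho>\<^sup>2 * \<beta>\<^sup>2 = \<beta> * (\<rho> * (t - 1)\<^sup>2 - \<rho> + \<beta> * \<rho>\<^sup>2) + (1 - \<rho>) * t\<^sup>2"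
    by (simp add: c_def power2_eq_square algebra_simps)
  have "\<beta> * (\<rho> - \<beta> * \<rho>\<^sup>2) \<le> \<beta> * (\<rho> * (t - 1)\<^sup>2) + (1 - \<rho>) * t\<^sup>2"
    using q e by (simp add: algebra_simps)
  also have "\<dots> \<le> \<beta> * (\<rho> * A) + (1 - \<rho>) * (\<beta> * B)"
    using assms by (intro add_mono mult_left_mono) auto
  also have "\<dots> = \<beta> * (\<rho> * A + (1 - \<rho>) * B)" by (simp add: algebra_simps)
  finally show ?thesis using assms(3) by simp
qed

lemma wV_split0:
  assumes "finite W" "0 \<in> W"
  shows "wV W q V = (if 0 \<in> V then q 0 else 1 - q 0) * wV (W - {0}) q V"
  unfolding wV_def using assms by (simp add: prod.remove)

lemma pairs_edges: "pc_pairs n = edges {..<n}"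
  by (auto simp: pc_pairs_def edges_def)

lemma pc_prob_alt: "pc_prob n \<rho> V E = wV {..<n} (\<lambda>_. \<rho>) V * wE (edges {..<n}) V E"
  by (simp add: pc_prob_def wV_def wE_def pairs_edges)

lemma mse_decomp:
  assumes "n \<ge> 1"
  shows "pc_mse n \<rho> f = \<rho> * Exq {..<n} (qf \<rho> {0}) (\<lambda>E. (f E - 1)\<^sup>2) + (1 - \<rho>) * Exq {..<n} (q0 \<rho> {0}) (\<lambda>E. (f E)\<^sup>2)"
proof -
  let ?W = "{..<n::nat}"
  have W0: "0 \<in> ?W" using assms by auto
  have fW: "finite ?W" by simp
  define S where "S V = (\<Sum>E\<in>Pow (edges ?W). wE (edges ?W) V E * (f E - (if (0::nat) \<in> V then 1 else 0))\<^sup>2)" for V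
  define S1 where "S1 V = (\<Sum>E\<in>Pow (edges ?W). wE (edges ?W) V E * (f E - 1)\<^sup>2)" for V
  define S0 where "S0 V = (\<Sum>E\<in>Pow (edges ?W). wE (edges ?W) V E * (f E)\<^sup>2)" for V
  have "pc_mse n \<rho> f = (\<Sum>V\<in>Pow ?W. wV ?W (\<lambda>_. \<rho>) V * S V)"
    unfolding pc_mse_def pc_prob_alt pairs_edges S_def by (simp add: sum_distrib_left mult.assoc)
  also have "\<dots> = (\<Sum>V\<in>Pow ?W. \<rho> * (wV ?W (qf \<rho> {0}) V * S1 V) + (1 - \<rho>) * (wV ?W (q0 \<rho> {0}) V * S0 V))"
  proof (rule sum.cong[OF refl])
    fix V
    have r: "wV (?W - {0}) (qf \<rho> {0}) V = wV (?W - {0}) (\<lambda>_. \<rho>) V" "wV (?W - {0}) (q0 \<rho> {0}) V = wV (?W - {0}) (\<lambda>_. \<rho>) V"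
      by (rule wV_cong, simp add: qf_def q0_def)+
    show "wV ?W (\<lambda>_. \<rho>) V * S V = \<rho> * (wV ?W (qf \<rho> {0}) V * S1 V) + (1 - \<rho>) * (wV ?W (q0 \<rho> {0}) V * S0 V)"
      unfolding wV_split0[OF fW W0, of "\<lambda>_. \<rho>"] wV_split0[OF fW W0, of "qf \<rho> {0}"] wV_split0[OF fW W0, of "q0 \<rho> {0}"] r
      by (cases "0 \<in> V") (simp_all add: qf_def q0_def S_def S1_def S0_def)
  qed
  also have "\<dots> = \<rho> * Exq ?W (qf \<rho> {0}) (\<lambda>E. (f E - 1)\<^sup>2) + (1 - \<rho>) * Exq ?W (q0 \<rho> {0}) (\<lambda>E. (f E)\<^sup>2)"
    unfolding Exq_def S1_def S0_def by (simp add: sum.distrib sum_distrib_left)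
  finally show ?thesis .
qed

lemma pc_poly_alt:
  "pc_poly n D c E = polyE (pc_monomials n D) c (\<lambda>\<alpha>. {e\<in>pc_pairs n. \<alpha> e \<noteq> 0}) E"
  unfolding pc_poly_def polyE_def
proof (rule sum.cong[OF refl])
  fix \<alpha>
  have "(\<Prod>e\<in>pc_pairs n. (if e \<in> E then 1 else 0::real) ^ \<alpha> e) = (\<Prod>e\<in>pc_pairs n. if \<alpha> e \<noteq> 0 \<longrightarrow> e \<in> E then 1 else 0)"
    by (rule prod.cong) auto
  also have "\<dots> = (if \<forall>e\<in>pc_pairs n. \<alpha> e \<noteq> 0 \<longrightarrow> e \<in> E then 1 else 0)"
    by (rule prod_indicator) (simp add: pairs_edges)
  finally show "c \<alpha> * (\<Prod>e\<in>pc_pairs n. (if e \<in> E then 1 else 0) ^ \<alpha> e) =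
     c \<alpha> * (if {e \<in> pc_pairs n. \<alpha> e \<noteq> 0} \<subseteq> E then 1 else 0)" by auto
qed

lemma finite_monomials: "finite (pc_monomials n D)"
proof -
  let ?P = "pc_pairs n"
  have fP: "finite ?P" by (simp add: pairs_edges)
  have "pc_monomials n D \<subseteq> (\<lambda>f. \<lambda>e. if e \<in> ?P then f e else 0) ` (PiE ?P (\<lambda>_. {..D}))"
  proof
    fix \<alpha> assume a: "\<alpha> \<in> pc_monomials n D"
    have le: "\<alpha> e \<le> D" if "e \<in> ?P" for e
    proof -
      have "\<alpha> e \<le> (\<Sum>e\<in>?P. \<alpha> e)" using that fP by (intro member_le_sum) auto
      then show ?thesis using a by (auto simp: pc_monomials_def)
    qed
    have "\<alpha> = (\<lambda>e. if e \<in> ?P then (restrict \<alpha> ?P) e else 0)"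
      using a by (auto simp: pc_monomials_def)
    moreover have "restrict \<alpha> ?P \<in> PiE ?P (\<lambda>_. {..D})" using le by auto
    ultimately show "\<alpha> \<in> (\<lambda>f. \<lambda>e. if e \<in> ?P then f e else 0) ` (PiE ?P (\<lambda>_. {..D}))" by blast
  qed
  moreover have "finite (PiE ?P (\<lambda>_. {..D::nat}))" using fP by (intro finite_PiE) auto
  ultimately show ?thesis using finite_subset by blast
qed

lemma monomial_deg:
  assumes "\<alpha> \<in> pc_monomials n D"
  shows "{e\<in>pc_pairs n. \<alpha> e \<noteq> 0} \<subseteq> edges {..<n} \<and> card {e\<in>pc_pairs n. \<alpha> e \<noteq> 0} \<le> D"
proof
  show "{e\<in>pc_pairs n. \<alpha> e \<noteq> 0} \<subseteq> edges {..<n}" by (auto simp: pairs_edges)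
  have fP: "finite (pc_pairs n)" by (simp add: pairs_edges)
  have "card {e\<in>pc_pairs n. \<alpha> e \<noteq> 0} = (\<Sum>e\<in>{e\<in>pc_pairs n. \<alpha> e \<noteq> 0}. 1)" by simp
  also have "\<dots> \<le> (\<Sum>e\<in>{e\<in>pc_pairs n. \<alpha> e \<noteq> 0}. \<alpha> e)" by (rule sum_mono) auto
  also have "\<dots> \<le> (\<Sum>e\<in>pc_pairs n. \<alpha> e)" by (rule sum_mono2) (use fP in auto)
  also have "\<dots> \<le> D" using assms by (simp add: pc_monomials_def)
  finally show "card {e\<in>pc_pairs n. \<alpha> e \<noteq> 0} \<le> D" .
qed



lemma finite_bound:
  fixes n D D1 :: nat and \<rho> L0 \<beta> :: real
  assumes n1: "n \<ge> 1" and rho: "0 < \<rho>" "\<rho> < 1" and L0: "L0 \<ge> 0" and DD: "D \<le> D1"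
    and cnt: "\<And>(X::(nat\<times>nat) set) m d. finite X \<Longrightarrow> card X \<le> m\<^sup>2 \<Longrightarrow> m \<le> 2 * D1 \<Longrightarrow> d \<le> D1 \<Longrightarrow>
        real (card {B\<in>Pow X. card B \<le> d}) \<le> L0 ^ m"
    and hexp: "(1 + \<rho>\<^sup>2 * (2 * L0 / (1 - \<rho>)) * L0) ^ n \<le> 2"
    and hbeta: "(1 + \<rho>\<^sup>2 * (2 * L0 / (1 - \<rho>))) ^ n \<le> \<beta>" and b1: "\<beta> \<ge> 1"
  shows "\<rho> - \<beta> * \<rho>\<^sup>2 \<le> MMSE_le n \<rho> D"
proof -
  define L where "L = 2 * L0 / (1 - \<rho>)"
  have L: "L \<ge> 0" using L0 rho by (simp add: L_def)
  have L1: "(1 - \<rho>) * L = 2 * L0" using rho by (simp add: L_def)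
  have y: "\<rho>\<^sup>2 * L \<ge> 0" using L by simp
  have comb: "(\<Sum>B\<in>{B\<in>Pow (edges W - edges (W - T)). card B \<le> d}. (\<rho>\<^sup>2 * L) ^ card (Nb (W - T) B))
          \<le> (1 - \<rho>) ^ card T * L ^ card T"
    if "finite W" "card W \<le> n" "T \<subseteq> W" "T \<noteq> {}" "card T \<le> D1" "d \<le> D1" for W T d
  proof -
    have fT: "finite T" using that finite_subset by blast
    have s1: "card T \<ge> 1" using that fT by (simp add: Suc_le_eq card_gt_0_iff)
    have "(\<Sum>B\<in>{B\<in>Pow (edges W - edges (W - T)). card B \<le> d}. (\<rho>\<^sup>2 * L) ^ card (Nb (W - T) B))
        \<le> L0 ^ card T * (1 + \<rho>\<^sup>2 * L * L0) ^ n"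
      by (rule comb_general[OF that(1,2,3,6,5) y L0]) (rule cnt, auto simp: that)
    also have "\<dots> \<le> L0 ^ card T * 2"
      using hexp L0 by (intro mult_left_mono) (auto simp: L_def)
    also have "\<dots> \<le> L0 ^ card T * 2 ^ card T"
    proof -
      have "(2::real) ^ 1 \<le> 2 ^ card T" using s1 by (intro power_increasing) auto
      then show ?thesis using L0 by (intro mult_left_mono) auto
    qed
    also have "\<dots> = (2 * L0) ^ card T" by (simp add: power_mult_distrib mult.commute)
    also have "\<dots> = ((1 - \<rho>) * L) ^ card T" by (simp only: L1)
    also have "\<dots> = (1 - \<rho>) ^ card T * L ^ card T" by (simp add: power_mult_distrib)
    finally show ?thesis .
  qed
  note MI = main_ind[where n=n and Dmax=D1 and \<rho>=\<rho> and L=L, OF rho L comb]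
  let ?W = "{..<n}"
  let ?I = "pc_monomials n D"
  let ?M = "\<lambda>\<alpha>. {e\<in>pc_pairs n. \<alpha> e \<noteq> 0}"
  have W0: "0 \<in> ?W" using n1 by auto
  have fW: "finite ?W" by simp
  have bound: "\<rho> - \<beta> * \<rho>\<^sup>2 \<le> pc_mse n \<rho> (pc_poly n D c)" for c
  proof -
    interpret decomp ?W "{0}" ?I c ?M D \<rho>
    proof
      show "finite ?W" "{0} \<subseteq> ?W" "finite ?I" "\<rho> \<noteq> 1" using W0 rho by (auto simp: finite_monomials)
      fix i assume "i \<in> ?I" then show "?M i \<subseteq> edges ?W \<and> card (?M i) \<le> D" by (rule monomial_deg)
    qed
    have fpoly: "pc_poly n D c = g" by (rule ext) (simp add: pc_poly_alt)
    have IH: "(Exq W' (qf \<rho> (Nb W' B)) (gb B))\<^sup>2 \<le> L ^ card (Nb W' B) * Exq W' (\<lambda>_. \<rho>) (\<lambda>E. (gb B E)\<^sup>2)"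
      if B: "B \<in> Bs" for B
    proof -
      have cBd: "card B \<le> D" using B by simp
      have "card W' \<le> n" using card_mono[OF fW, of W'] by auto
      moreover have "card (Nb W' B) \<le> D1" using Nb_card[OF B] cBd DD by linarith
      moreover have "Nb W' B \<subseteq> W'" by (auto simp: Nb_def)
      moreover have "\<forall>i\<in>{i\<in>?I. B \<subseteq> ?M i}. ?M i - H \<subseteq> edges W' \<and> card (?M i - H) \<le> D - card B"
        using gb_deg[OF B] by blast
      ultimately have IHi: "(Exq W' (qf \<rho> (Nb W' B)) (polyE {i\<in>?I. B \<subseteq> ?M i} (\<lambda>i. c i * (1 / 2) ^ card (?M i \<inter> H)) (\<lambda>i. ?M i - H)))\<^sup>2
           \<le> L ^ card (Nb W' B) * Exq W' (\<lambda>_. \<rho>) (\<lambda>E. (polyE {i\<in>?I. B \<subseteq> ?M i} (\<lambda>i. c i * (1 / 2) ^ card (?M i \<inter> H)) (\<lambda>i. ?M i - H) E)\<^sup>2)"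
        by (intro MI[where d="D - card B", rule_format]) (use DD finite_monomials in auto)
      show ?thesis using IHi by (simp only: gb_poly)
    qed
    have st: "(Exq ?W (qf \<rho> {0}) g)\<^sup>2 \<le> (\<Sum>B\<in>Bs. (\<rho>\<^sup>2 * L) ^ card (Nb W' B)) * Exq ?W (q0 \<rho> {0}) (\<lambda>E. (g E)\<^sup>2)"
      by (rule step) (use rho L IH in auto)
    have E0: "Exq ?W (q0 \<rho> {0}) (\<lambda>E. (g E)\<^sup>2) \<ge> 0" by (rule Ex_nonneg) (use rho in \<open>auto simp: q0_def\<close>)
    have sb: "(\<Sum>B\<in>Bs. (\<rho>\<^sup>2 * L) ^ card (Nb W' B)) \<le> (1 + \<rho>\<^sup>2 * L) ^ n"
      by (rule star_bound[OF fW _ W0 y]) simp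
    have "(Exq ?W (qf \<rho> {0}) g)\<^sup>2 \<le> \<beta> * Exq ?W (q0 \<rho> {0}) (\<lambda>E. (g E)\<^sup>2)"
    proof -
      have "(\<Sum>B\<in>Bs. (\<rho>\<^sup>2 * L) ^ card (Nb W' B)) \<le> \<beta>" using sb hbeta by (simp add: L_def)
      then show ?thesis using st mult_right_mono[OF _ E0] by (meson order_trans)
    qed
    moreover have "Exq ?W (qf \<rho> {0}) (\<lambda>E. (g E - 1)\<^sup>2) \<ge> (Exq ?W (qf \<rho> {0}) g - 1)\<^sup>2"
    proof -
      have qq: "\<And>i. i \<in> ?W \<Longrightarrow> 0 \<le> qf \<rho> {0} i \<and> qf \<rho> {0} i \<le> 1" using rho by (auto simp: qf_def)
      have "Exq ?W (qf \<rho> {0}) (\<lambda>E. g E + (-1)) = Exq ?W (qf \<rho> {0}) g + Exq ?W (qf \<rho> {0}) (\<lambda>E. -1)"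
        by (rule Ex_add)
      also have "Exq ?W (qf \<rho> {0}) (\<lambda>E. -1) = -1" by (rule Ex_const[OF fW])
      finally have "Exq ?W (qf \<rho> {0}) (\<lambda>E. g E - 1) = Exq ?W (qf \<rho> {0}) g - 1" by simp
      then show ?thesis using Ex_jensen[where h="\<lambda>E. g E - 1" and q="qf \<rho> {0}" and W="?W", OF fW qq] by simp
    qed
    ultimately have "\<rho> - \<beta> * \<rho>\<^sup>2 \<le> \<rho> * Exq ?W (qf \<rho> {0}) (\<lambda>E. (g E - 1)\<^sup>2) + (1 - \<rho>) * Exq ?W (q0 \<rho> {0}) (\<lambda>E. (g E)\<^sup>2)"
      using quad[OF rho b1] by blast
    also have "\<dots> = pc_mse n \<rho> g" by (rule mse_decomp[OF n1, symmetric])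
    finally show ?thesis by (simp add: fpoly)
  qed
  show ?thesis unfolding MMSE_le_def by (rule cINF_greatest) (auto intro: bound)
qed



lemma choose_le_pow: "p choose j \<le> p ^ j"
  by (cases "j \<le> p") (auto simp: binomial_le_pow binomial_eq_0)

lemma sum_choose_le: "(\<Sum>j\<le>d. p choose j) \<le> (p + 1) ^ d"
proof -
  have "(\<Sum>j\<le>d. p choose j) \<le> (\<Sum>j\<le>d. (d choose j) * p ^ j)"
  proof (rule sum_mono)
    fix j assume "j \<in> {..d}"
    then have "d choose j \<ge> 1" by (simp add: Suc_le_eq zero_less_binomial)
    then have "p ^ j \<le> (d choose j) * p ^ j" by simp
    then show "p choose j \<le> (d choose j) * p ^ j" using choose_le_pow le_trans by blast
  qed
  also have "\<dots> = (p + 1) ^ d" using binomial_ring[of p 1 d] by simp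
  finally show ?thesis .
qed

lemma count_bound:
  assumes "finite X"
  shows "card {B\<in>Pow X. card B \<le> d} \<le> 2 ^ card X \<and> card {B\<in>Pow X. card B \<le> d} \<le> (card X + 1) ^ d"
proof
  show "card {B\<in>Pow X. card B \<le> d} \<le> 2 ^ card X"
  proof -
    have "card {B\<in>Pow X. card B \<le> d} \<le> card (Pow X)" by (rule card_mono) (use assms in auto)
    then show ?thesis using assms by (simp add: card_Pow)
  qed
  have eq: "{B\<in>Pow X. card B \<le> d} = (\<Union>j\<in>{..d}. {B. B \<subseteq> X \<and> card B = j})" by auto
  have "card {B\<in>Pow X. card B \<le> d} \<le> (\<Sum>j\<le>d. card {B. B \<subseteq> X \<and> card B = j})"
    unfolding eq by (rule card_UN_le) simp
  also have "\<dots> = (\<Sum>j\<le>d. card X choose j)" using assms by (simp add: n_subsets)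
  also have "\<dots> \<le> (card X + 1) ^ d" by (rule sum_choose_le)
  finally show "card {B\<in>Pow X. card B \<le> d} \<le> (card X + 1) ^ d" .
qed

lemma pow_exp: "(a::real) > 0 \<Longrightarrow> a ^ N = exp (real N * ln a)"
  by (simp add: exp_of_nat_mult)

lemma cnt_lemma:
  fixes D1 m d :: nat and X :: "'a set"
  assumes D1: "D1 \<ge> 1" and X: "finite X" "card X \<le> m\<^sup>2" and m: "m \<le> 2 * D1" and d: "d \<le> D1"
  shows "real (card {B\<in>Pow X. card B \<le> d}) \<le> exp (sqrt (real D1) * ln (8 * real D1 ^ 2)) ^ m"
proof -
  let ?l = "ln (8 * real D1 ^ 2)"
  let ?r = "sqrt (real D1)"
  have D1r: "real D1 \<ge> 1" using D1 by simp
  have l2: "ln 2 \<le> ?l"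
  proof -
    have "real D1 ^ 2 \<ge> 1" using D1r by (simp add: one_le_power)
    then have "(2::real) \<le> 8 * real D1 ^ 2" by linarith
    then show ?thesis by (subst ln_le_cancel_iff) (use D1 in auto)
  qed
  have l0: "0 \<le> ?l" using l2 ln_ge_zero[of 2] by linarith
  have rhs: "exp (?r * ?l) ^ m = exp (real m * ?r * ?l)" by (simp add: exp_of_nat_mult[symmetric] mult.assoc)
  have cb: "card {B\<in>Pow X. card B \<le> d} \<le> 2 ^ card X" "card {B\<in>Pow X. card B \<le> d} \<le> (card X + 1) ^ d"
    using count_bound[OF X(1)] by auto
  show ?thesis
  proof (cases "real m \<le> ?r")
    case True
    have "real (card {B\<in>Pow X. card B \<le> d}) \<le> real (2 ^ card X)" using cb(1) by (simp only: of_nat_le_iff)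
    also have "\<dots> = 2 ^ card X" by simp
    also have "\<dots> \<le> 2 ^ (m\<^sup>2)" by (rule power_increasing) (use X in auto)
    also have "\<dots> = exp (real (m\<^sup>2) * ln 2)" by (rule pow_exp) simp
    also have "\<dots> \<le> exp (real m * ?r * ?l)"
    proof -
      have "real (m\<^sup>2) = real m * real m" by (simp add: power2_eq_square)
      also have "\<dots> \<le> real m * ?r" using True by (intro mult_left_mono) auto
      finally have "real (m\<^sup>2) * ln 2 \<le> (real m * ?r) * ln 2" by (intro mult_right_mono) auto
      also have "\<dots> \<le> (real m * ?r) * ?l" using l2 by (intro mult_left_mono) auto
      finally show ?thesis by simp
    qed
    finally show ?thesis using rhs by simp
  next
    case False
    have "real (card {B\<in>Pow X. card B \<le> d}) \<le> real ((card X + 1) ^ d)" using cb(2) by linarith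
    also have "\<dots> = (real (card X) + 1) ^ d" by (simp add: add.commute)
    also have "\<dots> \<le> (real (card X) + 1) ^ D1" by (rule power_increasing[OF d]) simp
    also have "\<dots> \<le> (8 * real D1 ^ 2) ^ D1"
    proof (rule power_mono)
      have "real (card X) \<le> real (m ^ 2)" using X(2) by (simp only: of_nat_le_iff)
      also have "\<dots> = real m ^ 2" by simp
      also have "\<dots> \<le> (2 * real D1) ^ 2" using m by (intro power_mono) auto
      finally have "real (card X) \<le> 4 * real D1 ^ 2" by (simp add: power_mult_distrib)
      moreover have "1 \<le> 4 * real D1 ^ 2" using D1r one_le_power[of "real D1" 2] by linarith
      ultimately show "real (card X) + 1 \<le> 8 * real D1 ^ 2" by linarith
    qed simp
    also have "\<dots> = exp (real D1 * ?l)" by (rule pow_exp) (use D1r in simp)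
    also have "\<dots> \<le> exp (real m * ?r * ?l)"
    proof -
      have "real D1 = ?r * ?r" by simp
      also have "\<dots> \<le> real m * ?r" using False by (intro mult_right_mono) auto
      finally show ?thesis using l0 by (simp add: mult_right_mono)
    qed
    finally show ?thesis using rhs by simp
  qed
qed



lemma pow_le_exp: "(z::real) \<ge> 0 \<Longrightarrow> (1 + z) ^ n \<le> exp (real n * z)"
proof -
  assume z: "z \<ge> 0"
  have "(1 + z) ^ n \<le> exp z ^ n" by (rule power_mono) (use z in auto)
  also have "\<dots> = exp (real n * z)" by (simp add: exp_of_nat_mult)
  finally show ?thesis .
qed

lemma asym_core:
  fixes lv \<epsilon> \<eta> :: real and D :: nat
  assumes e: "\<epsilon> > 0" and l1: "lv \<ge> 1" and LL: "ln lv \<ge> 7" and r: "ln lv / lv \<le> \<epsilon> / 10"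
    and eta: "\<eta> = min 1 ((\<epsilon> / 10)\<^sup>2)" and Dle: "real D \<le> \<eta> * (lv / ln lv)\<^sup>2"
  shows "2 * (sqrt (real (max D 1)) * ln (8 * real (max D 1) ^ 2)) \<le> \<epsilon> * lv"
proof -
  define D1 where "D1 = max D 1"
  let ?L = "ln lv"
  have Lpos: "?L > 0" using LL by linarith
  have lpos: "lv > 0" using l1 by linarith
  have eta1: "\<eta> \<le> 1" "\<eta> \<ge> 0" using eta by auto
  have q1: "lv / ?L \<le> lv" using Lpos lpos LL by (simp add: divide_le_eq)
  have q0: "lv / ?L \<ge> 0" using Lpos lpos by simp
  have D1l: "real D1 \<le> lv\<^sup>2"
  proof -
    have "real D \<le> (lv / ?L)\<^sup>2"
      using mult_right_mono[OF eta1(1), of "(lv / ?L)\<^sup>2"] Dle by simp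
    also have "\<dots> \<le> lv\<^sup>2" using q1 q0 by (intro power_mono) auto
    finally have "real D \<le> lv\<^sup>2" .
    moreover have "1 \<le> lv\<^sup>2" using l1 one_le_power by blast
    ultimately show ?thesis by (simp add: D1_def)
  qed
  have D1pos: "real D1 \<ge> 1" by (simp add: D1_def)
  have lnb: "ln (8 * real D1 ^ 2) \<le> 5 * ?L"
  proof -
    have "8 * real D1 ^ 2 \<le> 8 * lv ^ 4"
    proof -
      have "real D1 ^ 2 \<le> (lv\<^sup>2) ^ 2" using D1l D1pos by (intro power_mono) auto
      then show ?thesis by (simp add: power_mult[symmetric])
    qed
    then have "ln (8 * real D1 ^ 2) \<le> ln (8 * lv ^ 4)"
      using D1pos by (subst ln_le_cancel_iff) auto
    also have "\<dots> = ln 8 + 4 * ?L" using lpos by (simp add: ln_mult ln_realpow)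
    also have "ln (8::real) \<le> 7" using ln_le_minus_one[of 8] by simp
    finally show ?thesis using LL by linarith
  qed
  have lnpos: "ln (8 * real D1 ^ 2) \<ge> 0"
  proof -
    have "1 \<le> real D1 ^ 2" using D1pos one_le_power by blast
    then show ?thesis by simp
  qed
  show ?thesis
  proof (cases "D = 0")
    case True
    then have "D1 = 1" by (simp add: D1_def)
    then have "2 * (sqrt (real D1) * ln (8 * real D1 ^ 2)) \<le> 10 * ?L" using lnb by simp
    also have "\<dots> \<le> \<epsilon> * lv" using r lpos by (simp add: divide_le_eq mult.commute)
    finally show ?thesis by (simp add: D1_def)
  next
    case False
    then have "D1 = D" by (simp add: D1_def)
    have se: "sqrt \<eta> \<le> \<epsilon> / 10"
    proof -
      have "\<eta> \<le> (\<epsilon> / 10)\<^sup>2" using eta by simp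
      then have "sqrt \<eta> \<le> sqrt ((\<epsilon> / 10)\<^sup>2)" by (rule real_sqrt_le_mono)
      then show ?thesis using e by simp
    qed
    have sD: "sqrt (real D1) \<le> sqrt \<eta> * (lv / ?L)"
    proof -
      have "sqrt (real D1) \<le> sqrt (\<eta> * (lv / ?L)\<^sup>2)" using Dle \<open>D1 = D\<close> by (intro real_sqrt_le_mono) simp
      also have "\<dots> = sqrt \<eta> * (lv / ?L)" using lpos Lpos by (simp add: real_sqrt_mult)
      finally show ?thesis .
    qed
    have "2 * (sqrt (real D1) * ln (8 * real D1 ^ 2)) \<le> 2 * ((sqrt \<eta> * (lv / ?L)) * (5 * ?L))"
      using sD lnb lnpos eta1 lpos Lpos by (intro mult_left_mono mult_mono) auto
    also have "\<dots> = 10 * sqrt \<eta> * lv" using Lpos by (simp add: field_simps)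
    also have "\<dots> \<le> \<epsilon> * lv" using mult_right_mono[of "10 * sqrt \<eta>" \<epsilon> lv] se lpos by simp
    finally show ?thesis by (simp add: D1_def)
  qed
qed



lemma eventually_bound:
  fixes k :: "nat \<Rightarrow> real" and D :: "nat \<Rightarrow> nat" and \<epsilon> \<eta> :: real and n :: nat
  assumes eps: "\<epsilon> > 0" and eta: "\<eta> = min 1 ((\<epsilon> / 10)\<^sup>2)"
    and kpos: "k n > 0" and kle: "k n \<le> real n powr (1/2 - \<epsilon>)"
    and n16: "n \<ge> 16" and Dn: "real (D n) \<le> \<eta> * (ln (real n) / ln (ln (real n)))\<^sup>2"
    and LL7: "ln (ln (real n)) \<ge> 7" and r: "ln (ln (real n)) / ln (real n) \<le> \<epsilon> / 10"
    and u4: "4 * real n powr (-\<epsilon>) \<le> ln 2"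
  shows "MMSE_le n (k n / real n) (D n) \<ge> k n / real n - (1 + (exp (4 * real n powr (-\<epsilon>)) - 1)) * (k n / real n)\<^sup>2"
proof -
  define N where "N = real n"
  define \<rho> where "\<rho> = k n / N"
  define D1 where "D1 = max (D n) 1"
  define s where "s = sqrt (real D1) * ln (8 * real D1 ^ 2)"
  define L0 where "L0 = exp s"
  define u where "u = N powr (-\<epsilon>)"
  define \<beta> where "\<beta> = exp (4 * u)"
  have N16: "N \<ge> 16" using n16 by (simp add: N_def)
  have Npos: "N > 0" using N16 by simp
  have Ln0: "ln N > 0" using N16 by simp
  have Ln1: "ln N \<ge> 1"
  proof -
    have "0 < ln (ln N)" using LL7 by (simp add: N_def)
    then show ?thesis using Ln0 by simp
  qed
  have core: "2 * s \<le> \<epsilon> * ln N"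
    unfolding s_def D1_def N_def by (rule asym_core[OF eps _ _ _ eta Dn]) (use Ln1 LL7 r in \<open>simp_all add: N_def\<close>)
  have D1r: "real D1 \<ge> 1" by (simp add: D1_def)
  have s0: "s \<ge> 0"
  proof -
    have "1 \<le> real D1 ^ 2" using D1r one_le_power by blast
    then show ?thesis by (simp add: s_def)
  qed
  have L01: "L0 \<ge> 1" using s0 by (simp add: L0_def)
  have L0sq: "L0\<^sup>2 \<le> N powr \<epsilon>"
  proof -
    have "L0\<^sup>2 = exp (2 * s)" by (simp add: L0_def power2_eq_square exp_add[symmetric])
    also have "\<dots> \<le> exp (\<epsilon> * ln N)" using core by simp
    also have "\<dots> = N powr \<epsilon>" using Npos by (simp add: powr_def)
    finally show ?thesis .
  qed
  have rho0: "\<rho> > 0" using kpos Npos by (simp add: \<rho>_def)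
  have kle': "k n \<le> N powr (1/2 - \<epsilon>)" using kle by (simp add: N_def)
  have rho_half: "\<rho> \<le> 1/2"
  proof -
    have "k n \<le> N powr (1/2)" using kle' N16 eps by (smt (verit) powr_mono)
    also have "\<dots> = sqrt N" using Npos by (simp add: powr_half_sqrt)
    also have "\<dots> \<le> N / 2"
    proof -
      have "4 \<le> sqrt N" using N16 real_sqrt_le_mono[of 16 N] by simp
      then have "4 * sqrt N \<le> sqrt N * sqrt N" using Npos by (intro mult_right_mono) auto
      also have "\<dots> = N" using Npos by simp
      finally show ?thesis using real_sqrt_ge_zero[of N] Npos by linarith
    qed
    finally show ?thesis using Npos by (simp add: \<rho>_def divide_le_eq)
  qed
  have x_bound: "N * \<rho>\<^sup>2 \<le> N powr (-2 * \<epsilon>)"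
  proof -
    have "(k n)\<^sup>2 \<le> (N powr (1/2 - \<epsilon>))\<^sup>2" using kle' kpos by (intro power_mono) auto
    also have "\<dots> = N powr (1 - 2 * \<epsilon>)" by (simp add: power2_eq_square powr_add[symmetric])
    finally have "(k n)\<^sup>2 \<le> N powr (1 - 2 * \<epsilon>)" .
    then have "N * \<rho>\<^sup>2 \<le> N powr (1 - 2 * \<epsilon>) / N" using Npos
      by (simp add: \<rho>_def power2_eq_square divide_le_eq field_simps)
    also have "\<dots> = N powr (-2 * \<epsilon>)"
    proof -
      have "N powr ((1 - 2 * \<epsilon>) - 1) = N powr (1 - 2 * \<epsilon>) / N powr 1" by (rule powr_diff)
      moreover have "N powr 1 = N" using Npos by simp
      ultimately show ?thesis by simp
    qed
    finally show ?thesis .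
  qed
  have xL: "N * \<rho>\<^sup>2 * L0\<^sup>2 \<le> u"
  proof -
    have "N * \<rho>\<^sup>2 * L0\<^sup>2 \<le> N powr (-2 * \<epsilon>) * N powr \<epsilon>"
      using x_bound L0sq Npos by (intro mult_mono) auto
    also have "\<dots> = u" by (simp add: u_def powr_add[symmetric])
    finally show ?thesis .
  qed
  define R where "R = 2 * L0 / (1 - \<rho>)"
  have R4: "R \<le> 4 * L0"
  proof -
    have "2 * L0 / (1 - \<rho>) \<le> 2 * L0 / (1/2)" using rho_half L01 by (intro divide_left_mono) auto
    then show ?thesis by (simp add: R_def)
  qed
  have R0: "R \<ge> 0" using rho_half L01 by (simp add: R_def)
  have x0: "N * \<rho>\<^sup>2 \<ge> 0" using Npos by simp
  have u0: "u \<ge> 0" by (simp add: u_def)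
  have hexp: "(1 + \<rho>\<^sup>2 * R * L0) ^ n \<le> 2"
  proof -
    have "(1 + \<rho>\<^sup>2 * R * L0) ^ n \<le> exp (real n * (\<rho>\<^sup>2 * R * L0))"
      by (rule pow_le_exp) (use R0 L01 in simp)
    also have "real n * (\<rho>\<^sup>2 * R * L0) = (N * \<rho>\<^sup>2) * R * L0" by (simp add: N_def)
    also have "\<dots> \<le> (N * \<rho>\<^sup>2) * (4 * L0) * L0" using R4 x0 L01 by (intro mult_right_mono mult_left_mono) auto
    also have "\<dots> = 4 * (N * \<rho>\<^sup>2 * L0\<^sup>2)" by (simp add: power2_eq_square)
    also have "\<dots> \<le> 4 * u" using xL by simp
    also have "\<dots> \<le> ln 2" using u4 by (simp add: u_def N_def)
    finally show ?thesis by simp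
  qed
  have hbeta: "(1 + \<rho>\<^sup>2 * R) ^ n \<le> \<beta>"
  proof -
    have "(1 + \<rho>\<^sup>2 * R) ^ n \<le> exp (real n * (\<rho>\<^sup>2 * R))"
      by (rule pow_le_exp) (use R0 in simp)
    also have "real n * (\<rho>\<^sup>2 * R) = (N * \<rho>\<^sup>2) * R" by (simp add: N_def)
    also have "\<dots> \<le> (N * \<rho>\<^sup>2) * (4 * L0)" using R4 x0 by (intro mult_left_mono) auto
    also have "\<dots> \<le> (N * \<rho>\<^sup>2) * (4 * L0\<^sup>2)"
    proof -
      have "L0 \<le> L0\<^sup>2" using L01 by (simp add: power2_eq_square)
      then show ?thesis using x0 by (intro mult_left_mono) auto
    qed
    also have "\<dots> = 4 * (N * \<rho>\<^sup>2 * L0\<^sup>2)" by simp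
    also have "\<dots> \<le> 4 * u" using xL by simp
    finally show ?thesis by (simp add: \<beta>_def)
  qed
  have b1: "\<beta> \<ge> 1" using u0 by (simp add: \<beta>_def)
  have n1: "n \<ge> 1" using n16 by simp
  have cnt: "real (card {B\<in>Pow X. card B \<le> d}) \<le> L0 ^ m"
    if "finite X" "card X \<le> m\<^sup>2" "m \<le> 2 * D1" "d \<le> D1" for X :: "(nat \<times> nat) set" and m d
    unfolding L0_def s_def by (rule cnt_lemma) (use that D1r in auto)
  have "\<rho> - \<beta> * \<rho>\<^sup>2 \<le> MMSE_le n \<rho> (D n)"
    by (rule finite_bound[OF n1 rho0 _ _ _ cnt]) (use rho_half L01 hexp hbeta b1 in \<open>auto simp: R_def D1_def\<close>)
  then show ?thesis by (simp add: \<rho>_def N_def \<beta>_def u_def)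
qed

theorem mainTheorem8:
  fixes k :: "nat \<Rightarrow> real" and D :: "nat \<Rightarrow> nat" and \<epsilon> :: real
  assumes eps: "\<epsilon> > 0"
    and kpos: "\<forall>n\<ge>1. k n > 0"
    and kle: "\<forall>n\<ge>1. k n \<le> real n powr (1/2 - \<epsilon>)"
    and Dsmall: "(\<lambda>n. real (D n)) \<in> o(\<lambda>n. (ln (real n) / ln (ln (real n)))\<^sup>2)"
  shows "\<exists>g :: nat \<Rightarrow> real. g \<longlonglongrightarrow> 0 \<and>
           (\<forall>\<^sub>F n in sequentially.
              MMSE_le n (k n / real n) (D n) \<ge>
                k n / real n - (1 + g n) * (k n / real n)\<^sup>2)"
proof -
  define u where "u n = real n powr (-\<epsilon>)" for n :: nat
  define g where "g n = exp (4 * u n) - 1" for n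
  define \<eta> where "\<eta> = min 1 ((\<epsilon> / 10)\<^sup>2)"
  have etapos: "\<eta> > 0" using eps by (simp add: \<eta>_def)
  have u0: "u \<longlonglongrightarrow> 0" unfolding u_def
    by (intro tendsto_neg_powr filterlim_real_sequentially) (use eps in auto)
  have "(\<lambda>n. exp (4 * u n) - 1) \<longlonglongrightarrow> exp (4 * 0) - 1" by (intro tendsto_intros u0)
  moreover have "g = (\<lambda>n. exp (4 * u n) - 1)" by (rule ext) (simp add: g_def)
  ultimately have g0: "g \<longlonglongrightarrow> 0" by simp
  have lnlim: "filterlim (\<lambda>n::nat. ln (real n)) at_top sequentially"
    by (rule filterlim_compose[OF ln_at_top filterlim_real_sequentially])
  have lnlnlim: "filterlim (\<lambda>n::nat. ln (ln (real n))) at_top sequentially"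
    by (rule filterlim_compose[OF ln_at_top lnlim])
  have ratlim: "(\<lambda>n::nat. ln (ln (real n)) / ln (real n)) \<longlonglongrightarrow> 0"
    by (rule filterlim_compose[OF ln_x_over_x_tendsto_0 lnlim])
  have ev1: "eventually (\<lambda>n. n \<ge> (16::nat)) sequentially" by (rule eventually_ge_at_top)
  have ev2: "eventually (\<lambda>n. real (D n) \<le> \<eta> * (ln (real n) / ln (ln (real n)))\<^sup>2) sequentially"
    using landau_o.smallD[OF Dsmall etapos] by eventually_elim simp
  have ev3: "eventually (\<lambda>n. ln (ln (real n)) \<ge> 7) sequentially"
    using lnlnlim by (simp add: filterlim_at_top)
  have ev4: "eventually (\<lambda>n. ln (ln (real n)) / ln (real n) \<le> \<epsilon> / 10) sequentially"
  proof -
    have "eventually (\<lambda>n. ln (ln (real n)) / ln (real n) < \<epsilon> / 10) sequentially"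
      by (rule order_tendstoD(2)[OF ratlim]) (use eps in simp)
    then show ?thesis by eventually_elim simp
  qed
  have ev5: "eventually (\<lambda>n. 4 * real n powr (-\<epsilon>) \<le> ln 2) sequentially"
  proof -
    have "eventually (\<lambda>n. u n < ln 2 / 4) sequentially"
      by (rule order_tendstoD(2)[OF u0]) simp
    then show ?thesis by eventually_elim (simp add: u_def)
  qed
  have "eventually (\<lambda>n. MMSE_le n (k n / real n) (D n) \<ge> k n / real n - (1 + g n) * (k n / real n)\<^sup>2) sequentially"
    using ev1 ev2 ev3 ev4 ev5
  proof eventually_elim
    case (elim n)
    have "n \<ge> 1" using elim by simp
    then show ?case
      unfolding g_def u_def
      by (intro eventually_bound[OF eps \<eta>_def]) (use elim kpos kle in auto)
  qed
  then show ?thesis using g0 by blast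
qed


end
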